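(* (a) The basis $\{\widehat{\mathcal B}(q,t)_\alpha\}$ of $\mathsf{NSym}_{\mathbb C(q,t)}$ is multiplicative: $\widehat{\mathcal B}(q,t)_\alpha\widehat{\mathcal B}(q,t)_\beta=\widehat{\mathcal B}(q,t)_{\alpha\cdot\beta}$ for all compositions $\alpha,\beta$. (b) $\{\widehat{\mathcal B}(q,t)_k:k\ge0\}$ is a generating set of the algebra $\mathsf{NSym}_{\mathbb C(q,t)}$. (c) For every $k\ge0$, $$\triangle\widehat{\mathcal B}(q,t)_k=\sum_{A\subseteq[k]}(q+t)^{|c_2(A)|}t^{|c_1(A)|}\,\widehat{\mathcal B}(q,t)_{\alpha_A}\otimes\widehat{\mathcal B}(q,t)_{\beta_A}.$$ In particular, specializing $(q,t)=(1,0)$ and $(q,t)=(-1,1)$ recovers $\triangle H_k=\sum_{i+j=k}H_i\otimes H_j$ and $\triangle\Lambda_k=\sum_{i+j=k}\Lambda_i\otimes\Lambda_j$ in $\mathsf{NSym}$.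
   Context: $q,t$ commuting variables; $\mathsf{NSym}_{\mathbb C(q,t)}$ is the Hopf algebra of noncommutative symmetric functions over $\mathbb C(q,t)$, basis $H_\alpha$ (dual to monomial quasisymmetric functions), $H_k=H_{(k)}$. $[n]=\{1,\dots,n\}$. For a composition $\alpha$ of $n$, $\mathrm{set}(\alpha_1,\dots,\alpha_l)=\{\alpha_1,\dots,\alpha_1+\dots+\alpha_{l-1}\}\subseteq[n-1]$, $\ell(\alpha)=l$; $\beta\preceq\alpha$ means $\mathrm{set}(\alpha)\subseteq\mathrm{set}(\beta)$; $\alpha\cdot\beta$ is concatenation. Define $\widehat{\mathcal B}(q,t)_\alpha=\sum_{\beta\preceq\alpha}q^{n-\ell(\beta)}t^{\ell(\beta)-\ell(\alpha)}H_\beta$ (equivalently $\mathcal B(q,t)_{\alpha^c}$ with $\mathcal B(q,t)_{\mathrm{comp}(I)}=\sum_{J:\,I\cup J=[n-1]}q^{|I\setminus J|}t^{|I\cap J|}H_{\mathrm{comp}(J)}$ and $\alpha^c=\mathrm{comp}([n-1]\setminus\mathrm{set}(\alpha))$), $\widehat{\mathcal B}(q,t)_k=\widehat{\mathcal B}(q,t)_{(k)}$, and $\widehat{\mathcal B}(q,t)$ of the empty composition is $1$. For $A\subseteq[k]$: $\mathrm{conn}(A)$ is the set of maximal subsets of consecutive integers of $A$, listed $A_1,A_2,\dots$ by increasing minima; $A^c=[k]\setminus A$; $c_1(A)=\{\max B:B\in\mathrm{conn}(A)\}\setminus\{k\}$, $c_2(A)=\{\max B:B\in\mathrm{conn}(A^c)\}\setminus\{k\}$;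 $\alpha_A=(|A_1|,|A_2|,\dots)$ and $\beta_A=(|(A^c)_1|,|(A^c)_2|,\dots)$ (empty composition if the set is empty). $\Lambda_\alpha=\sum_{\beta\preceq\alpha}(-1)^{n-\ell(\beta)}H_\beta$ is the noncommutative elementary symmetric function, $\Lambda_k=\Lambda_{(k)}$. Specializations use $0^0=1$. *)

theory Defs
  imports Main "HOL-Computational_Algebra.Polynomial" "HOL-Computational_Algebra.Fraction_Field"
begin

text \<open>Noncommutative symmetric functions over a commutative ring 'a.
  An element is represented by its coefficient function in the basis H_alpha,
  alpha ranging over compositions (lists of positive naturals; [] is the empty composition).
  Elements of the tensor square are coefficient functions on pairs of compositions
  in the basis H_beta (x) H_gamma.\<close>

definition is_comp :: "nat list \<Rightarrow> bool" where
  "is_comp \<alpha> \<longleftrightarrow> (\<forall>x\<in>set \<alpha>. 0 < x)"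

definition nsym :: "(nat list \<Rightarrow> 'a::comm_ring_1) set" where
  "nsym = {f. finite {\<alpha>. f \<alpha> \<noteq> 0} \<and> (\<forall>\<alpha>. f \<alpha> \<noteq> 0 \<longrightarrow> is_comp \<alpha>)}"

definition HH :: "nat list \<Rightarrow> nat list \<Rightarrow> 'a::comm_ring_1" where
  "HH \<alpha> = (\<lambda>\<beta>. if \<beta> = \<alpha> then 1 else 0)"

definition Hk :: "nat \<Rightarrow> nat list \<Rightarrow> 'a::comm_ring_1" where
  "Hk k = HH (if k = 0 then [] else [k])"

definition nsym_one :: "nat list \<Rightarrow> 'a::comm_ring_1" where
  "nsym_one = HH []"

text \<open>Product: H_beta H_gamma = H_(beta.gamma).\<close>
definition nsym_mult :: "(nat list \<Rightarrow> 'a::comm_ring_1) \<Rightarrow> (nat list \<Rightarrow> 'a) \<Rightarrow> nat list \<Rightarrow> 'a" where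
  "nsym_mult f g = (\<lambda>\<alpha>. \<Sum>i\<le>length \<alpha>. f (take i \<alpha>) * g (drop i \<alpha>))"

definition nsym_add :: "(nat list \<Rightarrow> 'a::comm_ring_1) \<Rightarrow> (nat list \<Rightarrow> 'a) \<Rightarrow> nat list \<Rightarrow> 'a" where
  "nsym_add f g = (\<lambda>\<alpha>. f \<alpha> + g \<alpha>)"

definition nsym_smult :: "'a::comm_ring_1 \<Rightarrow> (nat list \<Rightarrow> 'a) \<Rightarrow> nat list \<Rightarrow> 'a" where
  "nsym_smult c f = (\<lambda>\<alpha>. c * f \<alpha>)"

inductive_set gen_alg :: "(nat list \<Rightarrow> 'a::comm_ring_1) set \<Rightarrow> (nat list \<Rightarrow> 'a) set"
  for G where
  one: "nsym_one \<in> gen_alg G"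
| gen: "g \<in> G \<Longrightarrow> g \<in> gen_alg G"
| add: "x \<in> gen_alg G \<Longrightarrow> y \<in> gen_alg G \<Longrightarrow> nsym_add x y \<in> gen_alg G"
| smult: "x \<in> gen_alg G \<Longrightarrow> nsym_smult c x \<in> gen_alg G"
| mult: "x \<in> gen_alg G \<Longrightarrow> y \<in> gen_alg G \<Longrightarrow> nsym_mult x y \<in> gen_alg G"

text \<open>Coproduct: the algebra morphism with Delta H_k = sum_{i+j=k} H_i (x) H_j, i.e.
  Delta H_alpha = sum over a+b=alpha (componentwise, a,b weak compositions) of
  H_(a without zeros) (x) H_(b without zeros).\<close>
definition cop_coeff :: "nat list \<Rightarrow> nat list \<Rightarrow> nat list \<Rightarrow> nat" where
  "cop_coeff \<alpha> \<beta> \<gamma> = card {(a, b). length a = length \<alpha> \<and> length b = length \<alpha> \<and>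
      (\<forall>i<length \<alpha>. a ! i + b ! i = \<alpha> ! i) \<and>
      filter (\<lambda>x. x \<noteq> 0) a = \<beta> \<and> filter (\<lambda>x. x \<noteq> 0) b = \<gamma>}"

definition coprod :: "(nat list \<Rightarrow> 'a::comm_ring_1) \<Rightarrow> nat list \<times> nat list \<Rightarrow> 'a" where
  "coprod f = (\<lambda>(\<beta>, \<gamma>). \<Sum>\<alpha>\<in>{\<alpha>. f \<alpha> \<noteq> 0}. f \<alpha> * of_nat (cop_coeff \<alpha> \<beta> \<gamma>))"

definition tensor :: "(nat list \<Rightarrow> 'a::comm_ring_1) \<Rightarrow> (nat list \<Rightarrow> 'a) \<Rightarrow> nat list \<times> nat list \<Rightarrow> 'a" where
  "tensor f g = (\<lambda>(\<beta>, \<gamma>). f \<beta> * g \<gamma>)"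

definition comp_set :: "nat list \<Rightarrow> nat set" where
  "comp_set \<alpha> = {sum_list (take i \<alpha>) | i. 0 < i \<and> i < length \<alpha>}"

text \<open>refines beta alpha  means  beta \<preceq> alpha (beta a composition of the same n).\<close>
definition refines :: "nat list \<Rightarrow> nat list \<Rightarrow> bool" where
  "refines \<beta> \<alpha> \<longleftrightarrow> is_comp \<beta> \<and> sum_list \<beta> = sum_list \<alpha> \<and> comp_set \<alpha> \<subseteq> comp_set \<beta>"

definition Bhat :: "'a::comm_ring_1 \<Rightarrow> 'a \<Rightarrow> nat list \<Rightarrow> nat list \<Rightarrow> 'a" where
  "Bhat q t \<alpha> = (\<lambda>\<beta>. if refines \<beta> \<alpha>
      then q ^ (sum_list \<alpha> - length \<beta>) * t ^ (length \<beta> - length \<alpha>) else 0)"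

definition Bhatk :: "'a::comm_ring_1 \<Rightarrow> 'a \<Rightarrow> nat \<Rightarrow> nat list \<Rightarrow> 'a" where
  "Bhatk q t k = Bhat q t (if k = 0 then [] else [k])"

definition Lam :: "nat list \<Rightarrow> nat list \<Rightarrow> 'a::comm_ring_1" where
  "Lam \<alpha> = (\<lambda>\<beta>. if refines \<beta> \<alpha> then (-1) ^ (sum_list \<alpha> - length \<beta>) else 0)"

definition Lamk :: "nat \<Rightarrow> nat list \<Rightarrow> 'a::comm_ring_1" where
  "Lamk k = Lam (if k = 0 then [] else [k])"

definition consecutive :: "nat set \<Rightarrow> bool" where
  "consecutive B \<longleftrightarrow> (\<forall>x y z. x \<in> B \<longrightarrow> z \<in> B \<longrightarrow> x \<le> y \<longrightarrow> y \<le> z \<longrightarrow> y \<in> B)"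

definition conn :: "nat set \<Rightarrow> nat set set" where
  "conn A = {B. B \<noteq> {} \<and> B \<subseteq> A \<and> consecutive B \<and>
               (\<forall>C. B \<subseteq> C \<longrightarrow> C \<subseteq> A \<longrightarrow> consecutive C \<longrightarrow> C = B)}"

definition conn_comp :: "nat set \<Rightarrow> nat list" where
  "conn_comp A = map (\<lambda>m. card (THE B. B \<in> conn A \<and> Min B = m))
                     (sorted_list_of_set (Min ` conn A))"

definition c1 :: "nat \<Rightarrow> nat set \<Rightarrow> nat set" where
  "c1 k A = (Max ` conn A) - {k}"

definition c2 :: "nat \<Rightarrow> nat set \<Rightarrow> nat set" where
  "c2 k A = (Max ` conn ({1..k} - A)) - {k}"

definition alphaA :: "nat set \<Rightarrow> nat list" where
  "alphaA A = conn_comp A"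

definition betaA :: "nat \<Rightarrow> nat set \<Rightarrow> nat list" where
  "betaA k A = conn_comp ({1..k} - A)"

text \<open>The field C(q,t), realised as the fraction field of C[q][t].\<close>
type_synonym Cqt = "complex poly poly fract"

definition qq :: Cqt where "qq = Fract [:[:0, 1:]:] 1"
definition tt :: Cqt where "tt = Fract [:0, 1:] 1"

end

theory Submission
  imports Defs
begin


lemma refinesD: "refines g a \<Longrightarrow> is_comp g" "refines g a \<Longrightarrow> sum_list g = sum_list a"
  "refines g a \<Longrightarrow> comp_set a \<subseteq> comp_set g"
  by (simp_all add: refines_def)

lemma is_comp_append[simp]: "is_comp (a @ b) \<longleftrightarrow> is_comp a \<and> is_comp b"
  by (auto simp: is_comp_def)
lemma is_comp_Nil[simp]: "is_comp []" by (simp add: is_comp_def)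
lemma is_comp_Cons[simp]: "is_comp (x # a) \<longleftrightarrow> 0 < x \<and> is_comp a"
  by (auto simp: is_comp_def)

lemma is_comp_take: "is_comp a \<Longrightarrow> is_comp (take i a)"
  by (auto simp: is_comp_def dest: in_set_takeD)
lemma is_comp_drop: "is_comp a \<Longrightarrow> is_comp (drop i a)"
  by (auto simp: is_comp_def dest: in_set_dropD)

lemma sum_take_drop: "sum_list (take i g) + sum_list (drop i g) = sum_list g"
  by (simp only: sum_list_append[symmetric] append_take_drop_id)

lemma sum_pos: "is_comp a \<Longrightarrow> a \<noteq> [] \<Longrightarrow> 0 < sum_list a"
  by (cases a) auto

lemma len_le_sum: "is_comp a \<Longrightarrow> length a \<le> sum_list a"
  by (induction a) auto

lemma comp_set_bounds:
  assumes "is_comp a" "x \<in> comp_set a" shows "0 < x \<and> x < sum_list a"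
proof -
  obtain i where i: "x = sum_list (take i a)" "0 < i" "i < length a"
    using assms(2) by (auto simp: comp_set_def)
  have "take i a \<noteq> []" "drop i a \<noteq> []" using i by auto
  then have "0 < sum_list (take i a)" "0 < sum_list (drop i a)"
    using sum_pos is_comp_take is_comp_drop assms(1) by blast+
  moreover have "sum_list a = sum_list (take i a) + sum_list (drop i a)"
    by (rule sum_take_drop[symmetric])
  ultimately show ?thesis using i by simp
qed

lemma comp_set_memI: "0 < i \<Longrightarrow> i < length a \<Longrightarrow> sum_list (take i a) \<in> comp_set a"
  unfolding comp_set_def by blast

lemma comp_set_append:
  "comp_set (a @ b) = comp_set a \<union> (if a \<noteq> [] \<and> b \<noteq> [] then {sum_list a} else {})
     \<union> (\<lambda>x. sum_list a + x) ` comp_set b"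
proof (intro set_eqI iffI)
  fix x assume "x \<in> comp_set (a @ b)"
  then obtain i where i: "x = sum_list (take i (a @ b))" "0 < i" "i < length a + length b"
    by (auto simp: comp_set_def)
  show "x \<in> comp_set a \<union> (if a \<noteq> [] \<and> b \<noteq> [] then {sum_list a} else {})
     \<union> (\<lambda>x. sum_list a + x) ` comp_set b"
  proof (cases "i < length a")
    case True then show ?thesis using i by (auto simp: comp_set_def)
  next
    case False
    show ?thesis
    proof (cases "i = length a")
      case True then show ?thesis using i by auto
    next
      case False
      then have "0 < i - length a" "i - length a < length b" using \<open>\<not> i < length a\<close> i by auto
      then have "sum_list (take (i - length a) b) \<in> comp_set b"
        by (rule comp_set_memI)
      then show ?thesis using i \<open>\<not> i < length a\<close> by auto
    qed
  qed
next
  fix x assume x: "x \<in> comp_set a \<union> (if a \<noteq> [] \<and> b \<noteq> [] then {sum_list a} else {})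
     \<union> (\<lambda>x. sum_list a + x) ` comp_set b"
  show "x \<in> comp_set (a @ b)"
  proof -
    { assume "x \<in> comp_set a"
      then obtain i where "x = sum_list (take i a)" "0 < i" "i < length a"
        by (auto simp: comp_set_def)
      then have "x = sum_list (take i (a @ b))" "0 < i" "i < length (a @ b)" by auto
      then have ?thesis using comp_set_memI[of i "a @ b"] by simp }
    moreover
    { assume "a \<noteq> []" "b \<noteq> []" "x = sum_list a"
      then have "x = sum_list (take (length a) (a @ b))" "0 < length a" "length a < length (a @ b)" by auto
      then have ?thesis using comp_set_memI[of "length a" "a @ b"] by simp }
    moreover
    { fix y assume "y \<in> comp_set b" "x = sum_list a + y"
      then obtain i where "y = sum_list (take i b)" "0 < i" "i < length b" "x = sum_list a + y"
        by (auto simp: comp_set_def)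
      then have "x = sum_list (take (length a + i) (a @ b))" "0 < length a + i" "length a + i < length (a @ b)" by auto
      then have ?thesis using comp_set_memI[of "length a + i" "a @ b"] by simp }
    ultimately show ?thesis using x by (auto split: if_splits)
  qed
qed

lemma comp_set_single[simp]: "comp_set [m] = {}"
  by (auto simp: comp_set_def)
lemma comp_set_Nil[simp]: "comp_set [] = {}"
  by (auto simp: comp_set_def)

lemma refines_single: "refines g [m] \<longleftrightarrow> is_comp g \<and> sum_list g = m"
  by (simp add: refines_def)

lemma refines_Nil: "refines g [] \<longleftrightarrow> g = []"
proof
  assume "refines g []"
  then have "is_comp g" "sum_list g = 0" by (auto simp: refines_def)
  show "g = []"
  proof (rule ccontr)
    assume "g \<noteq> []"
    then have "0 < sum_list g" using sum_pos \<open>is_comp g\<close> by blast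
    then show False using \<open>sum_list g = 0\<close> by simp
  qed
next
  assume "g = []" then show "refines g []" by (simp add: refines_def)
qed

lemma take_sum_inj:
  assumes "is_comp g" "i \<le> length g" "j \<le> length g" "sum_list (take i g) = sum_list (take j g)"
  shows "i = j"
proof -
  have H: False if ij: "i < j" "j \<le> length g" "sum_list (take i g) = sum_list (take j g)" for i j
  proof -
    have "take j g = take i g @ take (j - i) (drop i g)"
      using take_add[of i "j - i" g] ij by simp
    then have e: "sum_list (take j g) = sum_list (take i g) + sum_list (take (j - i) (drop i g))"
      by simp
    have "take (j - i) (drop i g) \<noteq> []" using ij by auto
    moreover have "is_comp (take (j - i) (drop i g))" using assms(1) is_comp_take is_comp_drop by blast
    ultimately have "0 < sum_list (take (j - i) (drop i g))" by (rule sum_pos[rotated])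
    then show False using e ij(3) by linarith
  qed
  show ?thesis
  proof (cases i j rule: linorder_cases)
    case less then show ?thesis using H assms by blast
  next
    case greater then show ?thesis using H[of j i] assms by simp
  qed simp
qed

lemma refines_append:
  assumes a: "is_comp a" and b: "is_comp b"
  shows "refines g (a @ b) \<longleftrightarrow> (\<exists>i \<le> length g. refines (take i g) a \<and> refines (drop i g) b)"
proof
  assume r: "refines g (a @ b)"
  then have g: "is_comp g" "sum_list g = sum_list a + sum_list b"
    "comp_set (a @ b) \<subseteq> comp_set g" by (auto simp: refines_def)
  show "\<exists>i \<le> length g. refines (take i g) a \<and> refines (drop i g) b"
  proof (cases "a = []")
    case True then show ?thesis using r by (auto simp: refines_Nil intro!: exI[of _ 0])
  next
    case anz: False
    show ?thesis
    proof (cases "b = []")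
      case True then show ?thesis using r by (auto simp: refines_Nil intro!: exI[of _ "length g"])
    next
      case bnz: False
      have "sum_list a \<in> comp_set g" using g anz bnz comp_set_append[of a b] by auto
      then obtain i where i: "sum_list a = sum_list (take i g)" "0 < i" "i < length g"
        by (auto simp: comp_set_def)
      have gs: "g = take i g @ drop i g" by simp
      have tnz: "take i g \<noteq> []" "drop i g \<noteq> []" using i by auto
      have cg: "comp_set g = comp_set (take i g) \<union> {sum_list a} \<union> (\<lambda>x. sum_list a + x) ` comp_set (drop i g)"
        using comp_set_append[of "take i g" "drop i g"] tnz i by simp
      have ct: "is_comp (take i g)" "is_comp (drop i g)" using g is_comp_take is_comp_drop by auto
      have sd: "sum_list (drop i g) = sum_list b"
        using g(2) i(1) sum_take_drop[of i g] by simp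
      have "comp_set a \<subseteq> comp_set (take i g)"
      proof
        fix x assume x: "x \<in> comp_set a"
        then have "x \<in> comp_set g" using g comp_set_append[of a b] by auto
        moreover have "x < sum_list a" using comp_set_bounds[OF a x] by simp
        ultimately show "x \<in> comp_set (take i g)" using cg by auto
      qed
      moreover have "comp_set b \<subseteq> comp_set (drop i g)"
      proof
        fix y assume y: "y \<in> comp_set b"
        then have "sum_list a + y \<in> comp_set g" using g comp_set_append[of a b] by auto
        moreover have "0 < y" using comp_set_bounds[OF b y] by simp
        moreover have "\<forall>z\<in>comp_set (take i g). z < sum_list a"
          using comp_set_bounds[OF ct(1)] i by auto
        ultimately have "sum_list a + y \<in> (\<lambda>x. sum_list a + x) ` comp_set (drop i g)"
          using cg by auto
        then show "y \<in> comp_set (drop i g)" by auto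
      qed
      ultimately show ?thesis using i ct sd by (auto simp: refines_def intro!: exI[of _ i])
    qed
  qed
next
  assume "\<exists>i \<le> length g. refines (take i g) a \<and> refines (drop i g) b"
  then obtain i where i: "i \<le> length g" "refines (take i g) a" "refines (drop i g) b" by blast
  have gs: "g = take i g @ drop i g" by simp
  have "is_comp (take i g)" "is_comp (drop i g)" "sum_list (take i g) = sum_list a"
    "sum_list (drop i g) = sum_list b" using i by (auto simp: refines_def)
  then have "is_comp (take i g @ drop i g)" "sum_list (take i g @ drop i g) = sum_list a + sum_list b"
    by (simp_all only: is_comp_append sum_list_append)
  then have cg: "is_comp g" and sg: "sum_list g = sum_list a + sum_list b" by simp_all
  have st: "sum_list (take i g) = sum_list a" using refinesD(2)[OF i(2)] .
  have "comp_set (a @ b) \<subseteq> comp_set g"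
  proof -
    have e: "comp_set g = comp_set (take i g) \<union> (if take i g \<noteq> [] \<and> drop i g \<noteq> [] then {sum_list a} else {})
       \<union> (\<lambda>x. sum_list a + x) ` comp_set (drop i g)"
      using comp_set_append[of "take i g" "drop i g"] st by (simp only: append_take_drop_id st)
    have sdb: "sum_list (drop i g) = sum_list b" using refinesD(2)[OF i(3)] .
    have "take i g \<noteq> []" if "a \<noteq> []"
    proof
      assume "take i g = []"
      then have "sum_list (take i g) = 0" by (simp only: sum_list.Nil)
      moreover have "0 < sum_list a" using sum_pos[OF a] that by blast
      ultimately show False using st by linarith
    qed
    moreover have "drop i g \<noteq> []" if "b \<noteq> []"
    proof
      assume "drop i g = []"
      then have "sum_list (drop i g) = 0" by (simp only: sum_list.Nil)
      moreover have "0 < sum_list b" using sum_pos[OF b] that by blast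
      ultimately show False using sdb by linarith
    qed
    ultimately have ne: "a \<noteq> [] \<and> b \<noteq> [] \<Longrightarrow> take i g \<noteq> [] \<and> drop i g \<noteq> []" by blast
    have s1: "comp_set a \<subseteq> comp_set (take i g)" by (rule refinesD(3)[OF i(2)])
    have s2: "comp_set b \<subseteq> comp_set (drop i g)" by (rule refinesD(3)[OF i(3)])
    have t1: "comp_set a \<subseteq> comp_set g" using s1 by (subst e) blast
    have t2: "(if a \<noteq> [] \<and> b \<noteq> [] then {sum_list a} else {}) \<subseteq> comp_set g"
    proof (cases "a \<noteq> [] \<and> b \<noteq> []")
      case True
      then have "take i g \<noteq> [] \<and> drop i g \<noteq> []" by (rule ne)
      then have "sum_list a \<in> comp_set g" by (subst e) simp
      then show ?thesis using True by simp
    next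
      case False
      then have "(if a \<noteq> [] \<and> b \<noteq> [] then {sum_list a} else {}) = {}" by (rule if_not_P)
      then show ?thesis by (simp only: empty_subsetI)
    qed
    have "(\<lambda>x. sum_list a + x) ` comp_set b \<subseteq> (\<lambda>x. sum_list a + x) ` comp_set (drop i g)"
      using s2 by (rule image_mono)
    then have t3: "(\<lambda>x. sum_list a + x) ` comp_set b \<subseteq> comp_set g" by (subst e) blast
    show ?thesis unfolding comp_set_append[of a b] using t1 t2 t3 by (intro Un_least)
  qed
  moreover have "sum_list g = sum_list (a @ b)" using sg by (simp only: sum_list_append)
  ultimately show "refines g (a @ b)" using cg unfolding refines_def by (intro conjI)
qed

lemma refines_comp: "refines g a \<Longrightarrow> is_comp g" by (simp add: refines_def)

lemma refines_len_le: "is_comp a \<Longrightarrow> refines g a \<Longrightarrow> length a \<le> length g"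
proof (induction a arbitrary: g)
  case Nil then show ?case by simp
next
  case (Cons x a)
  then obtain i where i: "i \<le> length g" "refines (take i g) [x]" "refines (drop i g) a"
    using refines_append[of "[x]" a g] by auto
  have "sum_list (take i g) = x" "0 < x" using i(2) Cons.prems by (auto simp: refines_single)
  then have "take i g \<noteq> []" by (metis less_irrefl sum_list.Nil)
  then show ?case using Cons.IH[of "drop i g"] i Cons.prems by auto
qed

lemma refines_len_sum: "refines g a \<Longrightarrow> length g \<le> sum_list a"
  unfolding refines_def using len_le_sum[of g] by simp

lemma refines_eq_len: "is_comp a \<Longrightarrow> refines g a \<Longrightarrow> length g = length a \<Longrightarrow> g = a"
proof (induction a arbitrary: g)
  case Nil then show ?case by (simp add: refines_Nil)
next
  case (Cons x a)
  then obtain i where i: "i \<le> length g" "refines (take i g) [x]" "refines (drop i g) a"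
    using refines_append[of "[x]" a g] by auto
  have "sum_list (take i g) = x" "0 < x" using i(2) Cons.prems by (auto simp: refines_single)
  then have "take i g \<noteq> []" by (metis less_irrefl sum_list.Nil)
  then have "1 \<le> i" by (cases i) auto
  have "length a \<le> length (drop i g)" using refines_len_le[of a "drop i g"] i(3) Cons.prems(1) by simp
  moreover have "length (drop i g) = length g - i" by simp
  moreover have lg: "length g = Suc (length a)" using Cons.prems(3) by simp
  ultimately have i1: "i = 1" using \<open>1 \<le> i\<close> i(1) by arith
  have "length (drop 1 g) = length a" using Cons.prems(3) by simp
  then have d: "drop 1 g = a" using Cons.IH[of "drop 1 g"] i(3) i1 Cons.prems(1) by simp
  obtain y g' where g: "g = y # g'" using Cons.prems(3) by (cases g) auto
  have "take 1 g = [y]" using g by simp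
  then have "y = x" using i(2) i1 by (simp add: refines_single)
  then show ?case using d g by simp
qed



lemma Bhat_eq: "Bhat q t a g = (if refines g a then q ^ (sum_list a - length g) * t ^ (length g - length a) else 0)"
  by (simp add: Bhat_def)

lemma refines_refl: "is_comp a \<Longrightarrow> refines a a"
  by (simp add: refines_def)

lemma Bhat_Nil: "Bhat q t [] = nsym_one"
proof
  fix g
  show "Bhat q t [] g = nsym_one g"
    by (cases "g = []") (simp_all add: Bhat_eq refines_Nil nsym_one_def HH_def)
qed

theorem Bhat_mult:
  fixes q t :: "'a::comm_ring_1"
  assumes a: "is_comp a" and b: "is_comp b"
  shows "nsym_mult (Bhat q t a) (Bhat q t b) = Bhat q t (a @ b)"
proof
  fix g
  show "nsym_mult (Bhat q t a) (Bhat q t b) g = Bhat q t (a @ b) g"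
  proof (cases "refines g (a @ b)")
    case True
    then obtain i where i: "i \<le> length g" "refines (take i g) a" "refines (drop i g) b"
      using refines_append[OF a b] by blast
    have cg: "is_comp g" using refinesD(1)[OF True] .
    have z: "Bhat q t a (take j g) * Bhat q t b (drop j g) = 0" if j: "j \<in> {..length g} - {i}" for j
    proof (cases "refines (take j g) a \<and> refines (drop j g) b")
      case True
      then have "sum_list (take j g) = sum_list (take i g)"
        using refinesD(2) i by simp
      moreover have "j \<le> length g" using j by simp
      ultimately have "j = i" using take_sum_inj[OF cg, of j i] i(1) by simp
      then show ?thesis using j by simp
    qed (auto simp: Bhat_eq)
    have "nsym_mult (Bhat q t a) (Bhat q t b) g = (\<Sum>j\<le>length g. Bhat q t a (take j g) * Bhat q t b (drop j g))"
      by (simp add: nsym_mult_def)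
    also have "\<dots> = Bhat q t a (take i g) * Bhat q t b (drop i g)"
      using i(1) z by (subst sum.remove[of _ i]) auto
    also have "\<dots> = Bhat q t (a @ b) g"
    proof -
      have l1: "length a \<le> i" "i \<le> sum_list a"
        using refines_len_le[OF a i(2)] refines_len_sum[OF i(2)] i(1) by simp_all
      have l2: "length b \<le> length g - i" "length g - i \<le> sum_list b"
        using refines_len_le[OF b i(3)] refines_len_sum[OF i(3)] by simp_all
      have "Bhat q t a (take i g) * Bhat q t b (drop i g) =
          q ^ (sum_list a - i) * t ^ (i - length a) * (q ^ (sum_list b - (length g - i)) * t ^ (length g - i - length b))"
        using i by (simp add: Bhat_eq min_def)
      also have "\<dots> = q ^ ((sum_list a - i) + (sum_list b - (length g - i))) * t ^ ((i - length a) + (length g - i - length b))"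
        by (simp add: power_add algebra_simps)
      also have "(sum_list a - i) + (sum_list b - (length g - i)) = sum_list (a @ b) - length g"
        using l1 l2 i(1) by simp
      also have "(i - length a) + (length g - i - length b) = length g - length (a @ b)"
        using l1 l2 i(1) by simp
      finally show ?thesis using True by (simp add: Bhat_eq)
    qed
    finally show ?thesis .
  next
    case False
    then have "\<forall>j\<le>length g. \<not> (refines (take j g) a \<and> refines (drop j g) b)"
      using refines_append[OF a b] by blast
    then have "\<forall>j\<in>{..length g}. Bhat q t a (take j g) * Bhat q t b (drop j g) = 0"
      by (auto simp: Bhat_eq)
    then show ?thesis using False by (simp add: nsym_mult_def Bhat_eq[of q t "a @ b"])
  qed
qed

lemma comp_sum1: "is_comp v \<Longrightarrow> sum_list v = 1 \<longleftrightarrow> v = [1]"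
proof (cases v)
  case (Cons y ys)
  assume c: "is_comp v"
  show ?thesis
  proof
    assume s: "sum_list v = 1"
    have "0 < y" "is_comp ys" using c Cons by auto
    moreover have "y + sum_list ys = 1" using s Cons by simp
    ultimately have "sum_list ys = 0" "y = 1" by linarith+
    then have "ys = []" using sum_pos[OF \<open>is_comp ys\<close>] by (metis less_irrefl)
    then show "v = [1]" using Cons \<open>y = 1\<close> by simp
  qed simp
qed simp

lemma refines_snoc:
  assumes a: "is_comp a" and c: "0 < c"
  shows "refines g (a @ [c]) \<longleftrightarrow> (\<exists>u v. g = u @ v \<and> refines u a \<and> is_comp v \<and> sum_list v = c)"
proof
  assume "refines g (a @ [c])"
  then obtain i where "refines (take i g) a" "refines (drop i g) [c]"
    using refines_append[of a "[c]" g] a c by auto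
  then show "\<exists>u v. g = u @ v \<and> refines u a \<and> is_comp v \<and> sum_list v = c"
    by (intro exI[of _ "take i g"] exI[of _ "drop i g"]) (simp add: refines_single)
next
  assume "\<exists>u v. g = u @ v \<and> refines u a \<and> is_comp v \<and> sum_list v = c"
  then obtain u v where uv: "g = u @ v" "refines u a" "is_comp v" "sum_list v = c" by blast
  have e: "take (length u) g = u" "drop (length u) g = v" "length u \<le> length g" using uv(1) by simp_all
  have "refines (drop (length u) g) [c]" using e(2) uv by (simp add: refines_single)
  moreover have "refines (take (length u) g) a" using e(1) uv by simp
  ultimately show "refines g (a @ [c])" using refines_append[of a "[c]" g] a c e(3)
    by auto
qed

lemma refines_snoc1:
  assumes a: "is_comp a"
  shows "refines g (a @ [1]) \<longleftrightarrow> g \<noteq> [] \<and> last g = 1 \<and> refines (butlast g) a"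
proof
  assume "refines g (a @ [1])"
  then obtain u v where uv: "g = u @ v" "refines u a" "is_comp v" "sum_list v = 1"
    using refines_snoc[OF a, of 1] by auto
  then have "v = [1]" using comp_sum1 by blast
  then show "g \<noteq> [] \<and> last g = 1 \<and> refines (butlast g) a" using uv by simp
next
  assume g: "g \<noteq> [] \<and> last g = 1 \<and> refines (butlast g) a"
  then have "g = butlast g @ [1]" by (metis append_butlast_last_id)
  then show "refines g (a @ [1])" using refines_snoc[OF a, of 1] g
    by (metis comp_sum1 is_comp_Cons is_comp_Nil zero_less_one)
qed

lemma Bhat_snoc1:
  assumes a: "is_comp a"
  shows "Bhat q t (a @ [1]) g = (if g \<noteq> [] \<and> last g = 1 then Bhat q t a (butlast g) else 0)"
proof (cases "g \<noteq> [] \<and> last g = 1 \<and> refines (butlast g) a")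
  case True
  then have "1 \<le> length g" by (cases g) auto
  then show ?thesis using True refines_snoc1[OF a] by (simp add: Bhat_eq)
next
  case False
  then show ?thesis using refines_snoc1[OF a] by (auto simp: Bhat_eq)
qed

definition dec :: "nat list \<Rightarrow> nat list" where "dec g = butlast g @ [last g - 1]"
definition incr :: "nat list \<Rightarrow> nat list" where "incr a = butlast a @ [Suc (last a)]"

lemma dec_simps: "g \<noteq> [] \<Longrightarrow> dec g \<noteq> [] \<and> butlast (dec g) = butlast g \<and> last (dec g) = last g - 1 \<and> length (dec g) = length g"
  by (simp add: dec_def)

lemma refines_incr:
  assumes a: "is_comp a" and m: "0 < m"
  shows "refines g (a @ [Suc m]) \<longleftrightarrow>
     (g \<noteq> [] \<and> 2 \<le> last g \<and> refines (dec g) (a @ [m])) \<or> (g \<noteq> [] \<and> last g = 1 \<and> refines (butlast g) (a @ [m]))"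
proof
  assume "refines g (a @ [Suc m])"
  then obtain u v where uv: "g = u @ v" "refines u a" "is_comp v" "sum_list v = Suc m"
    using refines_snoc[OF a, of "Suc m"] by auto
  have vne: "v \<noteq> []" using uv by auto
  have vs: "v = butlast v @ [last v]" using vne by simp
  have lv: "0 < last v" using uv(3) vne by (simp add: is_comp_def)
  have cb: "is_comp (butlast v)" using uv(3) vs by (metis is_comp_append)
  have sv: "sum_list (butlast v) + last v = Suc m" using uv(4) vs by (metis sum_list_append sum_list_simps add.right_neutral)
  show "(g \<noteq> [] \<and> 2 \<le> last g \<and> refines (dec g) (a @ [m])) \<or> (g \<noteq> [] \<and> last g = 1 \<and> refines (butlast g) (a @ [m]))"
  proof (cases "last v = 1")
    case True
    have "butlast g = u @ butlast v" using uv(1) vne by (simp add: butlast_append)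
    moreover have "sum_list (butlast v) = m" using sv True by simp
    ultimately have "refines (butlast g) (a @ [m])" using refines_snoc[OF a m] uv cb by blast
    moreover have "last g = 1" using uv(1) vne True by simp
    ultimately show ?thesis using uv vne by simp
  next
    case False
    define w where "w = butlast v @ [last v - 1]"
    have "dec g = u @ w" using uv(1) vne by (simp add: dec_def w_def butlast_append)
    moreover have "is_comp w" using cb False lv by (simp add: w_def)
    moreover have "sum_list w = m" using sv False lv by (simp add: w_def)
    ultimately have "refines (dec g) (a @ [m])" using refines_snoc[OF a m] uv by blast
    moreover have "2 \<le> last g" using uv(1) vne False lv by simp
    ultimately show ?thesis using uv vne by simp
  qed
next
  assume "(g \<noteq> [] \<and> 2 \<le> last g \<and> refines (dec g) (a @ [m])) \<or> (g \<noteq> [] \<and> last g = 1 \<and> refines (butlast g) (a @ [m]))"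
  then show "refines g (a @ [Suc m])"
  proof
    assume h: "g \<noteq> [] \<and> 2 \<le> last g \<and> refines (dec g) (a @ [m])"
    then obtain u w where uw: "dec g = u @ w" "refines u a" "is_comp w" "sum_list w = m"
      using refines_snoc[OF a m] by auto
    have wne: "w \<noteq> []" using uw m by auto
    have "butlast g @ [last g - 1] = u @ butlast w @ [last w]" using uw(1) wne by (simp add: dec_def)
    then have e1: "butlast g = u @ butlast w" "last g - 1 = last w"
      by (metis append_assoc butlast_snoc last_snoc)+
    define v where "v = butlast w @ [Suc (last w)]"
    have lg: "last g = Suc (last w)" using e1(2) h by linarith
    have "g = butlast g @ [last g]" using h by simp
    then have "g = u @ v" using e1(1) lg unfolding v_def by simp
    moreover have ws: "w = butlast w @ [last w]" using wne by simp
    then have "is_comp (butlast w)" using uw(3) by (metis is_comp_append)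
    then have "is_comp v" unfolding v_def by simp
    moreover have "sum_list v = Suc m"
    proof -
      have "sum_list w = sum_list (butlast w) + last w" by (subst ws) simp
      then show ?thesis using uw(4) unfolding v_def by simp
    qed
    ultimately show ?thesis using refines_snoc[OF a, of "Suc m"] uw(2) by blast
  next
    assume h: "g \<noteq> [] \<and> last g = 1 \<and> refines (butlast g) (a @ [m])"
    then obtain u w where uw: "butlast g = u @ w" "refines u a" "is_comp w" "sum_list w = m"
      using refines_snoc[OF a m] by auto
    have "g = u @ (w @ [1])" using h uw(1) by (metis append_assoc append_butlast_last_id)
    moreover have "is_comp (w @ [1])" "sum_list (w @ [1]) = Suc m" using uw by simp_all
    ultimately show ?thesis using refines_snoc[OF a, of "Suc m"] uw(2) by blast
  qed
qed

lemma Bhat_incr: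
  fixes q t :: "'a::comm_ring_1"
  assumes a: "is_comp a" and m: "0 < m"
  shows "Bhat q t (a @ [Suc m]) g =
    (if g \<noteq> [] \<and> 2 \<le> last g then q * Bhat q t (a @ [m]) (dec g) else 0) +
    (if g \<noteq> [] \<and> last g = 1 then t * Bhat q t (a @ [m]) (butlast g) else 0)"
proof -
  have am: "is_comp (a @ [m])" using a m by simp
  consider (A) "g \<noteq> [] \<and> 2 \<le> last g" | (B) "g \<noteq> [] \<and> last g = 1" | (C) "\<not> (g \<noteq> [] \<and> 2 \<le> last g)" "\<not> (g \<noteq> [] \<and> last g = 1)"
    by blast
  then show ?thesis
  proof cases
    case A
    have r: "refines g (a @ [Suc m]) \<longleftrightarrow> refines (dec g) (a @ [m])" using refines_incr[OF a m] A by auto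
    show ?thesis
    proof (cases "refines (dec g) (a @ [m])")
      case True
      have ld: "length (dec g) = length g" using dec_simps A by blast
      have "length g \<le> sum_list (a @ [m])" using refines_len_sum[OF True] ld by simp
      then have "sum_list (a @ [Suc m]) - length g = Suc (sum_list (a @ [m]) - length g)" by simp
      then show ?thesis using A r True ld by (simp add: Bhat_eq)
    next
      case False then show ?thesis using A r by (simp add: Bhat_eq)
    qed
  next
    case B
    have r: "refines g (a @ [Suc m]) \<longleftrightarrow> refines (butlast g) (a @ [m])" using refines_incr[OF a m] B by auto
    show ?thesis
    proof (cases "refines (butlast g) (a @ [m])")
      case True
      have "length (a @ [m]) \<le> length (butlast g)" using refines_len_le[OF am True] .
      then have e: "length g - length (a @ [Suc m]) = Suc (length (butlast g) - length (a @ [m]))"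
        using B by (cases g rule: rev_cases) auto
      have e2: "sum_list (a @ [Suc m]) - length g = sum_list (a @ [m]) - length (butlast g)"
        using B by (cases g rule: rev_cases) auto
      show ?thesis using B r True e e2 by (simp add: Bhat_eq del: length_append sum_list_append length_butlast)
    next
      case False then show ?thesis using B r by (simp add: Bhat_eq)
    qed
  next
    case C
    then have "\<not> refines g (a @ [Suc m])" using refines_incr[OF a m] by auto
    then have "Bhat q t (a @ [Suc m]) g = 0" by (simp add: Bhat_eq)
    then show ?thesis by (simp only: if_not_P[OF C(1)] if_not_P[OF C(2)] add_0)
  qed
qed

lemma Bhat_incr':
  fixes q t :: "'a::comm_ring_1"
  assumes a: "is_comp a" and ne: "a \<noteq> []"
  shows "Bhat q t (incr a) g =
    (if g \<noteq> [] \<and> 2 \<le> last g then q * Bhat q t a (dec g) else 0) +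
    (if g \<noteq> [] \<and> last g = 1 then t * Bhat q t a (butlast g) else 0)"
proof -
  have e: "a = butlast a @ [last a]" using ne by simp
  have c: "is_comp (butlast a)" "0 < last a" using a e by (metis is_comp_append, metis is_comp_append is_comp_Cons)
  show ?thesis using Bhat_incr[OF c, of q t g] e unfolding incr_def by metis
qed



lemma gen_alg_zero: "(\<lambda>b. 0) \<in> gen_alg G"
  using gen_alg.smult[OF gen_alg.one, where c=0 and G=G] by (simp add: nsym_smult_def)

lemma gen_alg_sum:
  assumes "finite S" "\<And>x. x \<in> S \<Longrightarrow> f x \<in> gen_alg G"
  shows "(\<lambda>b. \<Sum>x\<in>S. f x b) \<in> gen_alg G"
  using assms
proof (induction S rule: finite_induct)
  case empty then show ?case by (simp add: gen_alg_zero)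
next
  case (insert x S)
  have "nsym_add (f x) (\<lambda>b. \<Sum>x\<in>S. f x b) \<in> gen_alg G"
    using insert by (intro gen_alg.add) auto
  moreover have "nsym_add (f x) (\<lambda>b. \<Sum>x\<in>S. f x b) = (\<lambda>b. \<Sum>x\<in>insert x S. f x b)"
    using insert by (simp add: nsym_add_def)
  ultimately show ?case by simp
qed

lemma gen_alg_smult': "f \<in> gen_alg G \<Longrightarrow> (\<lambda>b. c * f b) \<in> gen_alg G"
  using gen_alg.smult[where x=f and G=G and c=c] by (simp add: nsym_smult_def)

lemma Bhat_gen: "is_comp a \<Longrightarrow> Bhat q t a \<in> gen_alg (range (Bhatk q t))"
proof (induction a)
  case Nil then show ?case by (simp add: Bhat_Nil gen_alg.one)
next
  case (Cons x a)
  have "Bhat q t [x] = Bhatk q t x" using Cons.prems by (simp add: Bhatk_def)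
  then have "Bhat q t [x] \<in> gen_alg (range (Bhatk q t))" by (auto intro: gen_alg.gen)
  then have "nsym_mult (Bhat q t [x]) (Bhat q t a) \<in> gen_alg (range (Bhatk q t))"
    using Cons by (intro gen_alg.mult) auto
  moreover have "nsym_mult (Bhat q t [x]) (Bhat q t a) = Bhat q t ([x] @ a)"
    using Cons.prems by (intro Bhat_mult) auto
  ultimately show ?case by simp
qed

lemma finite_comps: "finite {g. is_comp g \<and> sum_list g = n}"
proof (rule finite_subset)
  show "{g. is_comp g \<and> sum_list g = n} \<subseteq> {xs. set xs \<subseteq> {..n} \<and> length xs \<le> n}"
    using member_le_sum_list len_le_sum by fastforce
  show "finite {xs. set xs \<subseteq> {..n} \<and> length xs \<le> n}"
    by (rule finite_lists_length_le) simp
qed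

lemma finite_refines: "finite {g. refines g a}"
  by (rule finite_subset[OF _ finite_comps[of "sum_list a"]]) (auto simp: refines_def)

lemma HH_gen:
  fixes q t :: "'a::field"
  assumes q: "q \<noteq> 0"
  shows "is_comp a \<Longrightarrow> HH a \<in> gen_alg (range (Bhatk q t))"
proof (induction "sum_list a - length a" arbitrary: a rule: less_induct)
  case less
  define R where "R = {g. refines g a}"
  have fR: "finite R" using finite_refines R_def by simp
  have aR: "a \<in> R" using refines_refl less.prems R_def by simp
  define c where "c = Bhat q t a a"
  have c: "c = q ^ (sum_list a - length a)" using refines_refl[OF less.prems] by (simp add: c_def Bhat_eq)
  then have cnz: "c \<noteq> 0" using q by simp
  have IH: "HH g \<in> gen_alg (range (Bhatk q t))" if g: "g \<in> R - {a}" for g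
  proof -
    have r: "refines g a" "g \<noteq> a" using g R_def by auto
    have "length a \<le> length g" using refines_len_le[OF less.prems r(1)] .
    moreover have "length g \<noteq> length a" using refines_eq_len[OF less.prems r(1)] r(2) by auto
    moreover have "length g \<le> sum_list a" using refines_len_sum[OF r(1)] .
    moreover have "sum_list g = sum_list a" "is_comp g" using refinesD r(1) by auto
    ultimately show ?thesis using less.hyps[of g] by simp
  qed
  define S where "S = (\<lambda>b. \<Sum>g\<in>R - {a}. Bhat q t a g * HH g b)"
  have Sg: "S \<in> gen_alg (range (Bhatk q t))"
    unfolding S_def using fR IH by (intro gen_alg_sum gen_alg_smult') auto
  have "nsym_smult (inverse c) (nsym_add (Bhat q t a) (nsym_smult (-1) S)) \<in> gen_alg (range (Bhatk q t))"
    using Sg Bhat_gen[OF less.prems] by (intro gen_alg.smult gen_alg.add) auto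
  moreover have "nsym_smult (inverse c) (nsym_add (Bhat q t a) (nsym_smult (-1) S)) = HH a"
  proof
    fix b
    have "Bhat q t a b = (\<Sum>g\<in>R. Bhat q t a g * HH g b)"
    proof (cases "b \<in> R")
      case True
      then show ?thesis using fR by (simp add: HH_def sum.delta[of R b "\<lambda>g. Bhat q t a g"] if_distrib cong: if_cong)
    next
      case False
      then have "Bhat q t a b = 0" by (simp add: R_def Bhat_eq)
      moreover have "(\<Sum>g\<in>R. Bhat q t a g * HH g b) = 0" using False by (intro sum.neutral) (auto simp: HH_def)
      ultimately show ?thesis by simp
    qed
    also have "\<dots> = c * HH a b + S b"
      using fR aR by (simp add: S_def c_def sum.remove)
    finally show "nsym_smult (inverse c) (nsym_add (Bhat q t a) (nsym_smult (-1) S)) b = HH a b"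
      using cnz by (simp add: nsym_smult_def nsym_add_def field_simps)
  qed
  ultimately show ?case by simp
qed

lemma nsym_gen:
  fixes q t :: "'a::field"
  assumes q: "q \<noteq> 0"
  shows "nsym \<subseteq> gen_alg (range (Bhatk q t))"
proof
  fix f :: "nat list \<Rightarrow> 'a" assume "f \<in> nsym"
  then have fS: "finite {a. f a \<noteq> 0}" and cS: "\<And>a. f a \<noteq> 0 \<Longrightarrow> is_comp a" by (auto simp: nsym_def)
  have "(\<lambda>b. \<Sum>a\<in>{a. f a \<noteq> 0}. f a * HH a b) \<in> gen_alg (range (Bhatk q t))"
    using fS cS HH_gen[OF q] by (intro gen_alg_sum gen_alg_smult') auto
  moreover have "(\<lambda>b. \<Sum>a\<in>{a. f a \<noteq> 0}. f a * HH a b) = f"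
  proof
    fix b
    have "(\<Sum>a\<in>{a. f a \<noteq> 0}. f a * HH a b) = (\<Sum>a\<in>{a. f a \<noteq> 0}. if b = a then f a else 0)"
      by (intro sum.cong) (auto simp: HH_def)
    also have "\<dots> = f b" using fS by (cases "f b = 0") (simp_all add: sum.delta')
    finally show "(\<Sum>a\<in>{a. f a \<noteq> 0}. f a * HH a b) = f b" .
  qed
  ultimately show "f \<in> gen_alg (range (Bhatk q t))" by simp
qed

lemma qq_nz: "qq \<noteq> 0"
  by (simp add: qq_def Zero_fract_def eq_fract)



definition splits :: "nat list \<Rightarrow> (nat list \<times> nat list) set" where
  "splits a = {(x, y). length x = length a \<and> length y = length a \<and> (\<forall>i<length a. x ! i + y ! i = a ! i)}"

definition nzf :: "nat list \<Rightarrow> nat list" where "nzf = filter (\<lambda>x. x \<noteq> 0)"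

lemma cop_coeff_splits: "cop_coeff a g d = card {p \<in> splits a. nzf (fst p) = g \<and> nzf (snd p) = d}"
  unfolding cop_coeff_def splits_def nzf_def
  by (rule arg_cong[where f=card]) auto

lemma splits_Nil: "splits [] = {([], [])}"
  by (auto simp: splits_def)

lemma splits_snoc: "splits (a @ [m]) = (\<lambda>(k, (x, y)). (x @ [k], y @ [m - k])) ` ({..m} \<times> splits a)"
proof (intro set_eqI iffI)
  fix p assume p: "p \<in> splits (a @ [m])"
  obtain X Y where pXY: "p = (X, Y)" by fastforce
  have l: "length X = Suc (length a)" "length Y = Suc (length a)"
    and s: "\<forall>i<Suc (length a). X ! i + Y ! i = (a @ [m]) ! i"
    using p pXY by (auto simp: splits_def)
  have ne: "X \<noteq> []" "Y \<noteq> []" using l by auto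
  have X: "X = butlast X @ [last X]" and Y: "Y = butlast Y @ [last Y]" using ne by simp_all
  have lm: "last X + last Y = m"
    using s[rule_format, of "length a"] ne l by (simp add: last_conv_nth nth_append)
  have "(butlast X, butlast Y) \<in> splits a"
    using l s by (auto simp: splits_def nth_butlast nth_append)
  moreover have "last X \<le> m" "last Y = m - last X" using lm by auto
  ultimately show "p \<in> (\<lambda>(k, (x, y)). (x @ [k], y @ [m - k])) ` ({..m} \<times> splits a)"
    using pXY X Y by (intro image_eqI[of _ _ "(last X, (butlast X, butlast Y))"]) auto
next
  fix p assume "p \<in> (\<lambda>(k, (x, y)). (x @ [k], y @ [m - k])) ` ({..m} \<times> splits a)"
  then obtain k x y where p: "p = (x @ [k], y @ [m - k])" "k \<le> m" "(x, y) \<in> splits a" by auto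
  then show "p \<in> splits (a @ [m])"
    by (auto simp: splits_def nth_append less_Suc_eq)
qed

lemma inj_snoc_map: "inj_on (\<lambda>(k, (x, y)). (x @ [k], y @ [m - k])) A"
  by (rule inj_onI) auto

lemma finite_splits: "finite (splits a)"
proof (induction a rule: rev_induct)
  case Nil then show ?case by (simp add: splits_Nil)
next
  case (snoc m a) then show ?case by (simp add: splits_snoc)
qed

definition rm :: "nat \<Rightarrow> nat list \<Rightarrow> nat list option" where
  "rm k g = (if k = 0 then Some g else if g \<noteq> [] \<and> last g = k then Some (butlast g) else None)"

definition copo :: "nat list \<Rightarrow> nat list option \<Rightarrow> nat list option \<Rightarrow> nat" where
  "copo a og od = (case og of None \<Rightarrow> 0 | Some g \<Rightarrow> (case od of None \<Rightarrow> 0 | Some d \<Rightarrow> cop_coeff a g d))"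

lemma nzf_snoc: "nzf (x @ [k]) = g \<longleftrightarrow> (case rm k g of None \<Rightarrow> False | Some g' \<Rightarrow> nzf x = g')"
proof (cases "k = 0")
  case True then show ?thesis by (simp add: nzf_def rm_def)
next
  case False
  have "nzf (x @ [k]) = nzf x @ [k]" using False by (simp add: nzf_def)
  moreover have "(nzf x @ [k] = g) \<longleftrightarrow> (g \<noteq> [] \<and> last g = k \<and> nzf x = butlast g)"
    by (cases g rule: rev_cases) auto
  ultimately show ?thesis using False by (auto simp: rm_def)
qed

lemma card_filter_sum: "finite A \<Longrightarrow> card {p \<in> A. P p} = (\<Sum>p\<in>A. if P p then 1 else 0)"
  by (simp add: sum.If_cases Int_def)

lemma copo_sum: "copo a og od = (\<Sum>p\<in>splits a. if (case og of None \<Rightarrow> False | Some g' \<Rightarrow> nzf (fst p) = g') \<and>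
     (case od of None \<Rightarrow> False | Some d' \<Rightarrow> nzf (snd p) = d') then 1 else 0)"
  by (cases og; cases od) (simp_all add: copo_def cop_coeff_splits card_filter_sum finite_splits)

lemma cop_snoc: "cop_coeff (a @ [m]) g d = (\<Sum>k\<le>m. copo a (rm k g) (rm (m - k) d))"
proof -
  let ?f = "\<lambda>(k, (x, y)). (x @ [k], y @ [m - k])"
  let ?P = "\<lambda>p. nzf (fst p) = g \<and> nzf (snd p) = d"
  have "cop_coeff (a @ [m]) g d = (\<Sum>p\<in>splits (a @ [m]). if ?P p then 1 else 0)"
    by (simp add: cop_coeff_splits card_filter_sum finite_splits)
  also have "\<dots> = (\<Sum>q\<in>{..m} \<times> splits a. (\<lambda>p. if ?P p then 1 else 0) (?f q))"
    unfolding splits_snoc by (rule sum.reindex[OF inj_snoc_map, unfolded comp_def])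
  also have "\<dots> = (\<Sum>k\<le>m. \<Sum>p\<in>splits a. (\<lambda>p. if ?P p then 1 else 0) (?f (k, p)))"
    unfolding sum.cartesian_product by (intro sum.cong refl) (auto split: prod.splits)
  also have "\<dots> = (\<Sum>k\<le>m. copo a (rm k g) (rm (m - k) d))"
  proof (rule sum.cong[OF refl])
    fix k
    show "(\<Sum>p\<in>splits a. (\<lambda>p. if ?P p then 1 else 0) (?f (k, p))) = copo a (rm k g) (rm (m - k) d)"
      unfolding copo_sum
    proof (rule sum.cong[OF refl])
      fix p :: "nat list \<times> nat list"
      obtain x y where p: "p = (x, y)" by fastforce
      show "(\<lambda>p. if ?P p then 1 else 0) (?f (k, p)) =
        (if (case rm k g of None \<Rightarrow> False | Some g' \<Rightarrow> nzf (fst p) = g') \<and>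
            (case rm (m - k) d of None \<Rightarrow> False | Some d' \<Rightarrow> nzf (snd p) = d') then 1 else 0)"
        unfolding p by (simp only: prod.case fst_conv snd_conv nzf_snoc)
    qed
  qed
  finally show ?thesis .
qed

lemma cop_Nil: "cop_coeff [] g d = (if g = [] \<and> d = [] then 1 else 0)"
proof -
  have "{p \<in> {([], [])}. nzf (fst p) = g \<and> nzf (snd p) = d} = (if g = [] \<and> d = [] then {([], [])} else {})"
    by (auto simp: nzf_def)
  then show ?thesis by (simp add: cop_coeff_splits splits_Nil)
qed

definition cL :: "nat list \<Rightarrow> nat list \<Rightarrow> nat list \<Rightarrow> nat" where
  "cL a g d = (\<Sum>k\<in>{1..last a}. copo (butlast a) (rm k g) (rm (last a - k) d))"
definition cR :: "nat list \<Rightarrow> nat list \<Rightarrow> nat list \<Rightarrow> nat" where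
  "cR a g d = copo (butlast a) (Some g) (rm (last a) d)"

lemma cop_split: "a \<noteq> [] \<Longrightarrow> cop_coeff a g d = cL a g d + cR a g d"
proof -
  assume "a \<noteq> []"
  then have "cop_coeff a g d = cop_coeff (butlast a @ [last a]) g d" by simp
  also have "\<dots> = (\<Sum>k\<le>last a. copo (butlast a) (rm k g) (rm (last a - k) d))" by (rule cop_snoc)
  also have "{..last a} = insert 0 {1..last a}" by auto
  also have "(\<Sum>k\<in>insert 0 {1..last a}. copo (butlast a) (rm k g) (rm (last a - k) d)) = cR a g d + cL a g d"
    by (simp add: cL_def cR_def rm_def)
  finally show ?thesis by simp
qed

lemma rm_1: "rm 1 g = (if g \<noteq> [] \<and> last g = 1 then Some (butlast g) else None)"
  by (simp add: rm_def)

lemma rm_1': "rm (Suc 0) g = (if g \<noteq> [] \<and> last g = Suc 0 then Some (butlast g) else None)"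
  by (simp add: rm_def)

lemma rm_Suc: "0 < y \<Longrightarrow> rm (Suc y) g = (if g \<noteq> [] \<and> 2 \<le> last g then rm y (dec g) else None)"
  by (auto simp: rm_def dec_def)

lemma copo_None[simp]: "copo a None od = 0" by (simp add: copo_def)
lemma copo_None2[simp]: "copo a og None = 0" by (cases og) (simp_all add: copo_def)

lemma cL_incr:
  assumes "a \<noteq> []" "0 < last a"
  shows "cL (incr a) g d = (if g \<noteq> [] \<and> last g = 1 then cR a (butlast g) d else 0) +
                           (if g \<noteq> [] \<and> 2 \<le> last g then cL a (dec g) d else 0)"
proof -
  define m where "m = last a"
  have bi: "butlast (incr a) = butlast a" "last (incr a) = Suc m" by (simp_all add: incr_def m_def)
  have "{1..Suc m} = insert 1 (Suc ` {1..m})" using assms by (auto simp: m_def image_iff)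
  define F where "F k = copo (butlast a) (rm k g) (rm (Suc m - k) d)" for k
  have "cL (incr a) g d = (\<Sum>k\<in>{1..Suc m}. F k)" unfolding cL_def bi F_def ..
  also have "\<dots> = F 1 + (\<Sum>k\<in>Suc ` {1..m}. F k)" unfolding \<open>{1..Suc m} = _\<close>
    by (subst sum.insert) auto
  also have "(\<Sum>k\<in>Suc ` {1..m}. F k) = (\<Sum>y\<in>{1..m}. F (Suc y))"
    by (subst sum.reindex) auto
  finally have "cL (incr a) g d = copo (butlast a) (rm 1 g) (rm m d) +
      (\<Sum>y\<in>{1..m}. copo (butlast a) (rm (Suc y) g) (rm (m - y) d))"
    by (simp add: F_def)
  also have "copo (butlast a) (rm 1 g) (rm m d) = (if g \<noteq> [] \<and> last g = 1 then cR a (butlast g) d else 0)"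
    by (simp add: rm_1 rm_1' cR_def m_def)
  also have "(\<Sum>y\<in>{1..m}. copo (butlast a) (rm (Suc y) g) (rm (m - y) d)) =
      (\<Sum>y\<in>{1..m}. if g \<noteq> [] \<and> 2 \<le> last g then copo (butlast a) (rm y (dec g)) (rm (m - y) d) else 0)"
    by (rule sum.cong) (simp_all add: rm_Suc)
  also have "\<dots> = (if g \<noteq> [] \<and> 2 \<le> last g then cL a (dec g) d else 0)"
    by (simp add: cL_def m_def)
  finally show ?thesis .
qed

lemma cR_incr:
  assumes "a \<noteq> []" "0 < last a"
  shows "cR (incr a) g d = (if d \<noteq> [] \<and> 2 \<le> last d then cR a g (dec d) else 0)"
  using assms by (simp add: cR_def incr_def rm_Suc)

lemma cL_snoc1: "cL (a @ [1]) g d = (if g \<noteq> [] \<and> last g = 1 then cop_coeff a (butlast g) d else 0)"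
  by (simp add: cL_def rm_1 rm_1' copo_def) (simp add: rm_def)

lemma cR_snoc1: "cR (a @ [1]) g d = (if d \<noteq> [] \<and> last d = 1 then cop_coeff a g (butlast d) else 0)"
  by (simp add: cR_def rm_1 rm_1' copo_def)

lemma sum_bl: "xs \<noteq> [] \<Longrightarrow> sum_list (butlast xs) + last xs = sum_list xs"
  by (cases xs rule: rev_cases) auto
lemma comp_bl: "is_comp xs \<Longrightarrow> is_comp (butlast xs)"
  by (auto simp: is_comp_def dest: in_set_butlastD)
lemma comp_last: "is_comp xs \<Longrightarrow> xs \<noteq> [] \<Longrightarrow> 0 < last xs"
  by (auto simp: is_comp_def)

definition Comps :: "nat \<Rightarrow> nat list set" where "Comps n = {a. is_comp a \<and> sum_list a = n}"

lemma finite_Comps: "finite (Comps n)"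
  using finite_comps by (simp add: Comps_def)

lemma Comps_1: "Comps 1 = {[1]}"
  using comp_sum1 by (auto simp: Comps_def)

lemma Comps_ne: "a \<in> Comps n \<Longrightarrow> 0 < n \<Longrightarrow> a \<noteq> [] \<and> 0 < last a"
proof -
  assume a: "a \<in> Comps n" "0 < n"
  then have "a \<noteq> []" by (auto simp: Comps_def)
  moreover then have "last a \<in> set a" by simp
  ultimately show ?thesis using a by (auto simp: Comps_def is_comp_def)
qed

lemma Comps_Suc:
  assumes n: "0 < n"
  shows "Comps (Suc n) = incr ` Comps n \<union> (\<lambda>a. a @ [1]) ` Comps n"
proof (intro set_eqI iffI)
  fix b assume b: "b \<in> Comps (Suc n)"
  then have bne: "b \<noteq> []" and cb: "is_comp b" and sb: "sum_list b = Suc n" by (auto simp: Comps_def)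
  have e: "b = butlast b @ [last b]" using bne by simp
  have cbb: "is_comp (butlast b)" "0 < last b" using cb bne comp_bl comp_last by auto
  have ss: "sum_list (butlast b) + last b = Suc n" using sb sum_bl[OF bne] by simp
  show "b \<in> incr ` Comps n \<union> (\<lambda>a. a @ [1]) ` Comps n"
  proof (cases "last b = 1")
    case True
    then have "butlast b \<in> Comps n" using cbb ss by (simp add: Comps_def)
    then show ?thesis using e True by auto
  next
    case False
    define a where "a = butlast b @ [last b - 1]"
    have "a \<in> Comps n" using cbb ss False by (simp add: Comps_def a_def)
    moreover have "incr a = b" using False cbb e by (simp add: a_def incr_def)
    ultimately show ?thesis by auto
  qed
next
  fix b assume "b \<in> incr ` Comps n \<union> (\<lambda>a. a @ [1]) ` Comps n"
  then show "b \<in> Comps (Suc n)"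
  proof
    assume "b \<in> incr ` Comps n"
    then obtain a where a: "a \<in> Comps n" "b = incr a" by auto
    then have ne: "a \<noteq> []" "0 < last a" using Comps_ne n by auto
    then have e: "a = butlast a @ [last a]" by simp
    have "is_comp (butlast a)" "sum_list (butlast a) + last a = n" using a(1) ne comp_bl sum_bl
      unfolding Comps_def by auto
    then show ?thesis using a(2) by (simp add: Comps_def incr_def)
  next
    assume "b \<in> (\<lambda>a. a @ [1]) ` Comps n"
    then show ?thesis by (auto simp: Comps_def)
  qed
qed

lemma inj_incr: "inj_on incr (Comps n)" if "0 < n"
proof (rule inj_onI)
  fix a b assume ab: "a \<in> Comps n" "b \<in> Comps n" "incr a = incr b"
  then have "a \<noteq> []" "b \<noteq> []" using Comps_ne that by auto
  moreover have "butlast a = butlast b" "last a = last b" using ab(3) unfolding incr_def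
    by (metis butlast_snoc, metis last_snoc Suc_inject)
  ultimately show "a = b" by (metis append_butlast_last_id)
qed

lemma Bhat_single: "Bhat q t [n] g = (if is_comp g \<and> sum_list g = n then q ^ (n - length g) * t ^ (length g - 1) else 0)"
  by (simp add: Bhat_eq refines_single)

lemma Bhat_single_incr:
  assumes a: "a \<in> Comps n" and n: "0 < n"
  shows "Bhat q t [Suc n] (incr a) = q * Bhat q t [n] a"
proof -
  have ne: "a \<noteq> []" "0 < last a" using Comps_ne a n by auto
  then have e: "a = butlast a @ [last a]" by simp
  have ca: "is_comp (butlast a)" "sum_list (butlast a) + last a = n" using a ne comp_bl sum_bl
    unfolding Comps_def by auto
  have li: "length (incr a) = length a" using ne by (simp add: incr_def)
  have "length a \<le> n" using a len_le_sum by (auto simp: Comps_def)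
  then have "Suc n - length a = Suc (n - length a)" by simp
  moreover have "is_comp (incr a) \<and> sum_list (incr a) = Suc n" using ca by (simp add: incr_def)
  ultimately show ?thesis using a li by (simp add: Bhat_single Comps_def)
qed

lemma Bhat_single_snoc1:
  assumes a: "a \<in> Comps n" and n: "0 < n"
  shows "Bhat q t [Suc n] (a @ [1]) = t * Bhat q t [n] a"
proof -
  have ne: "a \<noteq> []" using Comps_ne a n by auto
  then have "length a - 1 + 1 = length a" by (cases a) auto
  then have "t ^ length a = t * t ^ (length a - 1)" by (metis power_Suc Suc_eq_plus1)
  then show ?thesis using a by (simp add: Bhat_single Comps_def)
qed



definition LL :: "'a::comm_ring_1 \<Rightarrow> 'a \<Rightarrow> nat \<Rightarrow> nat list \<Rightarrow> nat list \<Rightarrow> 'a" where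
  "LL q t n g d = (\<Sum>a\<in>Comps (Suc n). Bhat q t [Suc n] a * of_nat (cL a g d))"
definition LR :: "'a::comm_ring_1 \<Rightarrow> 'a \<Rightarrow> nat \<Rightarrow> nat list \<Rightarrow> nat list \<Rightarrow> 'a" where
  "LR q t n g d = (\<Sum>a\<in>Comps (Suc n). Bhat q t [Suc n] a * of_nat (cR a g d))"

lemma sum_Comps_Suc:
  assumes n: "0 < n"
  shows "(\<Sum>a\<in>Comps (Suc n). F a) = (\<Sum>a\<in>Comps n. F (incr a)) + (\<Sum>a\<in>Comps n. F (a @ [1]))"
proof -
  have d: "incr ` Comps n \<inter> (\<lambda>a. a @ [1]) ` Comps n = {}"
  proof (rule equals0I)
    fix x assume "x \<in> incr ` Comps n \<inter> (\<lambda>a. a @ [1]) ` Comps n"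
    then obtain a b where ab: "a \<in> Comps n" "x = incr a" "x = b @ [1]" by blast
    then have "Suc (last a) = 1" unfolding incr_def by (metis last_snoc)
    then show False using Comps_ne[OF ab(1) n] by simp
  qed
  have "(\<Sum>a\<in>Comps (Suc n). F a) = (\<Sum>a\<in>incr ` Comps n. F a) + (\<Sum>a\<in>(\<lambda>a. a @ [1]) ` Comps n. F a)"
    unfolding Comps_Suc[OF n] by (rule sum.union_disjoint[OF _ _ d]) (simp_all add: finite_Comps)
  also have "(\<Sum>a\<in>incr ` Comps n. F a) = (\<Sum>a\<in>Comps n. F (incr a))"
    by (subst sum.reindex) (simp_all add: inj_incr[OF n])
  also have "(\<Sum>a\<in>(\<lambda>a. a @ [1]) ` Comps n. F a) = (\<Sum>a\<in>Comps n. F (a @ [1]))"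
    by (subst sum.reindex) (simp_all add: inj_on_def)
  finally show ?thesis .
qed

lemma LL_Suc:
  fixes q t :: "'a::comm_ring_1"
  shows "LL q t (Suc n) g d =
    (if g \<noteq> [] \<and> 2 \<le> last g then q * LL q t n (dec g) d else 0) +
    (if g \<noteq> [] \<and> last g = 1 then t * LL q t n (butlast g) d + (q + t) * LR q t n (butlast g) d else 0)"
proof -
  let ?C = "Comps (Suc n)"
  let ?c1 = "g \<noteq> [] \<and> last g = 1" and ?c2 = "g \<noteq> [] \<and> 2 \<le> last g"
  have "LL q t (Suc n) g d = (\<Sum>a\<in>?C. Bhat q t [Suc (Suc n)] (incr a) * of_nat (cL (incr a) g d))
      + (\<Sum>a\<in>?C. Bhat q t [Suc (Suc n)] (a @ [1]) * of_nat (cL (a @ [1]) g d))"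
    unfolding LL_def by (rule sum_Comps_Suc) simp
  also have "(\<Sum>a\<in>?C. Bhat q t [Suc (Suc n)] (incr a) * of_nat (cL (incr a) g d)) =
      (\<Sum>a\<in>?C. q * Bhat q t [Suc n] a * ((if ?c1 then of_nat (cR a (butlast g) d) else 0) +
                                        (if ?c2 then of_nat (cL a (dec g) d) else 0)))"
  proof (rule sum.cong[OF refl])
    fix a assume a: "a \<in> ?C"
    have ne: "a \<noteq> []" "0 < last a" using Comps_ne[OF a] by auto
    show "Bhat q t [Suc (Suc n)] (incr a) * of_nat (cL (incr a) g d) =
       q * Bhat q t [Suc n] a * ((if ?c1 then of_nat (cR a (butlast g) d) else 0) +
                                        (if ?c2 then of_nat (cL a (dec g) d) else 0))"
      unfolding Bhat_single_incr[OF a zero_less_Suc] cL_incr[OF ne] by (simp add: algebra_simps)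
  qed
  also have "(\<Sum>a\<in>?C. Bhat q t [Suc (Suc n)] (a @ [1]) * of_nat (cL (a @ [1]) g d)) =
      (\<Sum>a\<in>?C. t * Bhat q t [Suc n] a * (if ?c1 then of_nat (cL a (butlast g) d) + of_nat (cR a (butlast g) d) else 0))"
  proof (rule sum.cong[OF refl])
    fix a assume a: "a \<in> ?C"
    have ne: "a \<noteq> []" using Comps_ne[OF a] by auto
    show "Bhat q t [Suc (Suc n)] (a @ [1]) * of_nat (cL (a @ [1]) g d) =
       t * Bhat q t [Suc n] a * (if ?c1 then of_nat (cL a (butlast g) d) + of_nat (cR a (butlast g) d) else 0)"
      unfolding Bhat_single_snoc1[OF a zero_less_Suc] cL_snoc1 cop_split[OF ne] by (simp add: algebra_simps)
  qed
  finally have e: "LL q t (Suc n) g d = (\<Sum>a\<in>?C. q * Bhat q t [Suc n] a * ((if ?c1 then of_nat (cR a (butlast g) d) else 0) +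
                                        (if ?c2 then of_nat (cL a (dec g) d) else 0))) +
     (\<Sum>a\<in>?C. t * Bhat q t [Suc n] a * (if ?c1 then of_nat (cL a (butlast g) d) + of_nat (cR a (butlast g) d) else 0))" .
  consider (A) "?c1" "\<not> ?c2" | (B) "\<not> ?c1" "?c2" | (C) "\<not> ?c1" "\<not> ?c2" by linarith
  then show ?thesis
  proof cases
    case A
    have "LL q t (Suc n) g d = q * LR q t n (butlast g) d + (t * LL q t n (butlast g) d + t * LR q t n (butlast g) d)"
      using A by (subst e) (simp add: LL_def LR_def sum_distrib_left sum.distrib algebra_simps)
    then show ?thesis using A by (simp add: algebra_simps)
  next
    case B
    show ?thesis using B by (subst e) (simp add: LL_def LR_def sum_distrib_left sum.distrib algebra_simps)
  next
    case C
    show ?thesis by (subst e, simp only: if_not_P[OF C(1)] if_not_P[OF C(2)]) simp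
  qed
qed

lemma LR_Suc:
  fixes q t :: "'a::comm_ring_1"
  shows "LR q t (Suc n) g d =
    (if d \<noteq> [] \<and> 2 \<le> last d then q * LR q t n g (dec d) else 0) +
    (if d \<noteq> [] \<and> last d = 1 then t * LR q t n g (butlast d) + t * LL q t n g (butlast d) else 0)"
proof -
  let ?C = "Comps (Suc n)"
  let ?c1 = "d \<noteq> [] \<and> last d = 1" and ?c2 = "d \<noteq> [] \<and> 2 \<le> last d"
  have "LR q t (Suc n) g d = (\<Sum>a\<in>?C. Bhat q t [Suc (Suc n)] (incr a) * of_nat (cR (incr a) g d))
      + (\<Sum>a\<in>?C. Bhat q t [Suc (Suc n)] (a @ [1]) * of_nat (cR (a @ [1]) g d))"
    unfolding LR_def by (rule sum_Comps_Suc) simp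
  also have "(\<Sum>a\<in>?C. Bhat q t [Suc (Suc n)] (incr a) * of_nat (cR (incr a) g d)) =
      (\<Sum>a\<in>?C. q * Bhat q t [Suc n] a * (if ?c2 then of_nat (cR a g (dec d)) else 0))"
  proof (rule sum.cong[OF refl])
    fix a assume a: "a \<in> ?C"
    have ne: "a \<noteq> []" "0 < last a" using Comps_ne[OF a] by auto
    show "Bhat q t [Suc (Suc n)] (incr a) * of_nat (cR (incr a) g d) =
       q * Bhat q t [Suc n] a * (if ?c2 then of_nat (cR a g (dec d)) else 0)"
      unfolding Bhat_single_incr[OF a zero_less_Suc] cR_incr[OF ne] by (simp add: algebra_simps)
  qed
  also have "(\<Sum>a\<in>?C. Bhat q t [Suc (Suc n)] (a @ [1]) * of_nat (cR (a @ [1]) g d)) =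
      (\<Sum>a\<in>?C. t * Bhat q t [Suc n] a * (if ?c1 then of_nat (cL a g (butlast d)) + of_nat (cR a g (butlast d)) else 0))"
  proof (rule sum.cong[OF refl])
    fix a assume a: "a \<in> ?C"
    have ne: "a \<noteq> []" using Comps_ne[OF a] by auto
    show "Bhat q t [Suc (Suc n)] (a @ [1]) * of_nat (cR (a @ [1]) g d) =
       t * Bhat q t [Suc n] a * (if ?c1 then of_nat (cL a g (butlast d)) + of_nat (cR a g (butlast d)) else 0)"
      unfolding Bhat_single_snoc1[OF a zero_less_Suc] cR_snoc1 cop_split[OF ne] by (simp add: algebra_simps)
  qed
  finally have e: "LR q t (Suc n) g d = (\<Sum>a\<in>?C. q * Bhat q t [Suc n] a * (if ?c2 then of_nat (cR a g (dec d)) else 0)) +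
     (\<Sum>a\<in>?C. t * Bhat q t [Suc n] a * (if ?c1 then of_nat (cL a g (butlast d)) + of_nat (cR a g (butlast d)) else 0))" .
  consider (A) "?c1" "\<not> ?c2" | (B) "\<not> ?c1" "?c2" | (C) "\<not> ?c1" "\<not> ?c2" by linarith
  then show ?thesis
  proof cases
    case A
    show ?thesis using A by (subst e) (simp add: LL_def LR_def sum_distrib_left sum.distrib algebra_simps)
  next
    case B
    show ?thesis using B by (subst e) (simp add: LL_def LR_def sum_distrib_left sum.distrib algebra_simps)
  next
    case C
    show ?thesis by (subst e, simp only: if_not_P[OF C(1)] if_not_P[OF C(2)]) simp
  qed
qed

lemma single_iff: "(g \<noteq> [] \<and> last g = x \<and> butlast g = []) \<longleftrightarrow> g = [x]"
  by (cases g rule: rev_cases) auto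

lemma LL_0: "LL q t 0 g d = (if g = [1] \<and> d = [] then 1 else 0)"
proof -
  have "Bhat q t [1] [1] = 1" by (simp add: Bhat_single)
  moreover have "cL [1] g d = (if g = [1] \<and> d = [] then 1 else 0)"
    using cL_snoc1[of "[]" g d] single_iff[of g 1] by (auto simp: cop_Nil)
  ultimately show ?thesis by (simp add: LL_def Comps_1 Comps_1[simplified])
qed

lemma LR_0: "LR q t 0 g d = (if g = [] \<and> d = [1] then 1 else 0)"
proof -
  have "Bhat q t [1] [1] = 1" by (simp add: Bhat_single)
  moreover have "cR [1] g d = (if g = [] \<and> d = [1] then 1 else 0)"
    using cR_snoc1[of "[]" g d] single_iff[of d 1] by (auto simp: cop_Nil)
  ultimately show ?thesis by (simp add: LR_def Comps_1 Comps_1[simplified])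
qed

lemma coprod_LL:
  fixes q t :: "'a::comm_ring_1"
  shows "coprod (Bhatk q t (Suc n)) (g, d) = LL q t n g d + LR q t n g d"
proof -
  have sub: "{a. Bhatk q t (Suc n) a \<noteq> 0} \<subseteq> Comps (Suc n)"
    by (auto simp: Bhatk_def Bhat_single Comps_def split: if_splits)
  have "coprod (Bhatk q t (Suc n)) (g, d) = (\<Sum>a\<in>{a. Bhatk q t (Suc n) a \<noteq> 0}. Bhatk q t (Suc n) a * of_nat (cop_coeff a g d))"
    by (simp add: coprod_def)
  also have "\<dots> = (\<Sum>a\<in>Comps (Suc n). Bhatk q t (Suc n) a * of_nat (cop_coeff a g d))"
    by (rule sum.mono_neutral_left[OF finite_Comps sub]) auto
  also have "\<dots> = (\<Sum>a\<in>Comps (Suc n). Bhat q t [Suc n] a * of_nat (cL a g d) + Bhat q t [Suc n] a * of_nat (cR a g d))"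
  proof (rule sum.cong[OF refl])
    fix a assume "a \<in> Comps (Suc n)"
    then have "a \<noteq> []" using Comps_ne by auto
    then show "Bhatk q t (Suc n) a * of_nat (cop_coeff a g d) = Bhat q t [Suc n] a * of_nat (cL a g d) + Bhat q t [Suc n] a * of_nat (cR a g d)"
      by (simp add: cop_split Bhatk_def algebra_simps)
  qed
  also have "\<dots> = LL q t n g d + LR q t n g d"
    by (simp add: sum.distrib LL_def LR_def)
  finally show ?thesis .
qed



definition isint :: "nat set \<Rightarrow> nat \<Rightarrow> nat \<Rightarrow> bool" where
  "isint A i j \<longleftrightarrow> i \<le> j \<and> {i..j} \<subseteq> A \<and> (i = 0 \<or> i - 1 \<notin> A) \<and> Suc j \<notin> A"

lemma consecutive_interval: "consecutive {i..j}"
  by (auto simp: consecutive_def)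

lemma conn_char:
  assumes fA: "finite A"
  shows "B \<in> conn A \<longleftrightarrow> (\<exists>i j. B = {i..j} \<and> isint A i j)"
proof
  assume B: "B \<in> conn A"
  then have ne: "B \<noteq> {}" and sub: "B \<subseteq> A" and cB: "consecutive B"
    and mx: "\<And>C. B \<subseteq> C \<Longrightarrow> C \<subseteq> A \<Longrightarrow> consecutive C \<Longrightarrow> C = B"
    unfolding conn_def by blast+
  have fB: "finite B" using finite_subset[OF sub fA] .
  define i where "i = Min B"
  define j where "j = Max B"
  have ij: "i \<in> B" "j \<in> B" using fB ne by (simp_all add: i_def j_def)
  have Bij: "B = {i..j}"
  proof
    show "B \<subseteq> {i..j}"
    proof
      fix x assume x: "x \<in> B"
      have "i \<le> x" unfolding i_def using Min_le[OF fB x] .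
      moreover have "x \<le> j" unfolding j_def using Max_ge[OF fB x] .
      ultimately show "x \<in> {i..j}" by simp
    qed
    show "{i..j} \<subseteq> B"
    proof
      fix x assume "x \<in> {i..j}"
      then show "x \<in> B" using cB ij unfolding consecutive_def by (meson atLeastAtMost_iff)
    qed
  qed
  have "i \<le> j" using ij Bij by auto
  moreover have "Suc j \<notin> A"
  proof
    assume a: "Suc j \<in> A"
    have "{i..Suc j} = B"
      by (rule mx) (use Bij sub a \<open>i \<le> j\<close> in \<open>auto simp: consecutive_interval le_Suc_eq\<close>)
    then show False using Bij \<open>i \<le> j\<close> by (metis atLeastAtMost_iff le_Suc_eq not_less_eq_eq order_refl)
  qed
  moreover have "i = 0 \<or> i - 1 \<notin> A"
  proof (rule ccontr)
    assume a: "\<not> (i = 0 \<or> i - 1 \<notin> A)"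
    then have a1: "i - 1 \<in> A" "0 < i" by auto
    have "{i - 1..j} = B"
    proof (rule mx)
      show "B \<subseteq> {i - 1..j}" using Bij by auto
      show "{i - 1..j} \<subseteq> A"
      proof
        fix x assume "x \<in> {i - 1..j}"
        then have "x = i - 1 \<or> x \<in> {i..j}" by auto
        then show "x \<in> A" using a1 Bij sub by auto
      qed
      show "consecutive {i - 1..j}" by (rule consecutive_interval)
    qed
    then have "i - 1 \<in> B" using \<open>i \<le> j\<close> by auto
    then show False using Bij a1 by auto
  qed
  moreover have "{i..j} \<subseteq> A" using Bij sub by simp
  ultimately show "\<exists>i j. B = {i..j} \<and> isint A i j" using Bij unfolding isint_def by blast
next
  assume "\<exists>i j. B = {i..j} \<and> isint A i j"
  then obtain i j where B: "B = {i..j}" and ij: "i \<le> j" "{i..j} \<subseteq> A" "i = 0 \<or> i - 1 \<notin> A" "Suc j \<notin> A"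
    unfolding isint_def by blast
  have "C = B" if C: "B \<subseteq> C" "C \<subseteq> A" "consecutive C" for C
  proof
    show "C \<subseteq> B"
    proof
      fix x assume x: "x \<in> C"
      have iC: "i \<in> C" "j \<in> C" using C(1) B ij(1) by auto
      show "x \<in> B"
      proof (rule ccontr)
        assume "x \<notin> B"
        then have "x < i \<or> j < x" using B by auto
        then show False
        proof
          assume "x < i"
          then have "x \<le> i - 1" by arith
          moreover have "i - 1 \<le> i" by simp
          ultimately have "i - 1 \<in> C" using C(3) x iC unfolding consecutive_def by blast
          then show False using C(2) ij(3) \<open>x < i\<close> by auto
        next
          assume "j < x"
          then have "Suc j \<le> x" by simp
          moreover have "j \<le> Suc j" by simp
          ultimately have "Suc j \<in> C" using C(3) x iC unfolding consecutive_def by blast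
          then show False using C(2) ij(4) by auto
        qed
      qed
    qed
  qed (use C in auto)
  then show "B \<in> conn A" using B ij unfolding conn_def by (auto simp: consecutive_interval)
qed


lemma finite_conn: "finite A \<Longrightarrow> finite (conn A)"
  by (rule finite_subset[of _ "Pow A"]) (auto simp: conn_def)

lemma conn_eq: "finite A \<Longrightarrow> conn A = {{i..j} | i j. isint A i j}"
  using conn_char by blast

lemma isint_unique:
  assumes "isint A i j" "isint A i' j'" "x \<in> {i..j}" "x \<in> {i'..j'}"
  shows "i = i' \<and> j = j'"
proof -
  have a: "i \<le> j" "{i..j} \<subseteq> A" "i = 0 \<or> i - 1 \<notin> A" "Suc j \<notin> A"
    and b: "i' \<le> j'" "{i'..j'} \<subseteq> A" "i' = 0 \<or> i' - 1 \<notin> A" "Suc j' \<notin> A"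
    using assms(1,2) unfolding isint_def by blast+
  have "j = j'"
  proof (rule ccontr)
    assume "j \<noteq> j'"
    then consider "j < j'" | "j' < j" by linarith
    then show False
    proof cases
      case 1
      then have "Suc j \<in> {i'..j'}" using assms(3,4) by auto
      then show False using b(2) a(4) by blast
    next
      case 2
      then have "Suc j' \<in> {i..j}" using assms(3,4) by auto
      then show False using a(2) b(4) by blast
    qed
  qed
  moreover have "i = i'"
  proof (rule ccontr)
    assume "i \<noteq> i'"
    then consider "i < i'" | "i' < i" by linarith
    then show False
    proof cases
      case 1
      then have "i' - 1 \<in> {i..j}" using assms(3,4) by auto
      then show False using a(2) b(3) 1 by auto
    next
      case 2
      then have "i - 1 \<in> {i'..j'}" using assms(3,4) by auto
      then show False using b(2) a(3) 2 by auto
    qed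
  qed
  ultimately show ?thesis by simp
qed

lemma interval_eq: "(i::nat) \<le> j \<Longrightarrow> i' \<le> j' \<Longrightarrow> {i..j} = {i'..j'} \<longleftrightarrow> i = i' \<and> j = j'"
  by (simp add: Icc_eq_Icc)

lemma Max_Icc[simp]: "(i::nat) \<le> j \<Longrightarrow> Max {i..j} = j"
  by (rule Max_eqI) auto
lemma Min_Icc[simp]: "(i::nat) \<le> j \<Longrightarrow> Min {i..j} = i"
  by (rule Min_eqI) auto

lemma ends_conn:
  assumes fA: "finite A"
  shows "Max ` conn A = {j \<in> A. Suc j \<notin> A}"
proof
  show "Max ` conn A \<subseteq> {j \<in> A. Suc j \<notin> A}"
  proof
    fix x assume "x \<in> Max ` conn A"
    then obtain B where B: "B \<in> conn A" "x = Max B" by blast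
    then obtain i j where "B = {i..j}" "isint A i j" using conn_char[OF fA] by blast
    then show "x \<in> {j \<in> A. Suc j \<notin> A}" using B(2) unfolding isint_def by auto
  qed
next
  show "{j \<in> A. Suc j \<notin> A} \<subseteq> Max ` conn A"
  proof
    fix j assume j: "j \<in> {j \<in> A. Suc j \<notin> A}"
    define S where "S = {i. i \<le> j \<and> {i..j} \<subseteq> A}"
    have "j \<in> S" using j by (auto simp: S_def)
    moreover have "finite S" by (rule finite_subset[of _ "{..j}"]) (auto simp: S_def)
    moreover have "S \<noteq> {}" using \<open>j \<in> S\<close> by blast
    ultimately have i0: "Min S \<in> S" "\<And>x. x \<in> S \<Longrightarrow> Min S \<le> x"
      using Min_in[of S] Min_le[of S] by auto
    define i where "i = Min S"
    have iS: "i \<in> S" using i0(1) by (simp only: i_def)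
    have imin: "\<And>x. x \<in> S \<Longrightarrow> i \<le> x" using i0(2) by (simp only: i_def)
    have ij: "i \<le> j" "{i..j} \<subseteq> A" using iS by (simp_all add: S_def)
    have "i = 0 \<or> i - 1 \<notin> A"
    proof (rule ccontr)
      assume "\<not> (i = 0 \<or> i - 1 \<notin> A)"
      then have a: "0 < i" "i - 1 \<in> A" by auto
      have "{i - 1..j} \<subseteq> A"
      proof
        fix x assume "x \<in> {i - 1..j}"
        then have "x = i - 1 \<or> x \<in> {i..j}" by auto
        then show "x \<in> A" using a ij by blast
      qed
      then have "i - 1 \<in> S" using ij by (simp add: S_def)
      then have "i \<le> i - 1" by (rule imin)
      then show False using a by linarith
    qed
    then have "isint A i j" using ij j unfolding isint_def by simp
    then have "{i..j} \<in> conn A" using conn_char[OF fA] by blast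
    moreover have "Max {i..j} = j" using \<open>isint A i j\<close> by (simp add: isint_def)
    ultimately show "j \<in> Max ` conn A" by (metis imageI)
  qed
qed

lemma conn_the:
  assumes fA: "finite A" and B0: "B0 \<in> conn A"
  shows "(THE B. B \<in> conn A \<and> Min B = Min B0) = B0"
proof (rule the_equality)
  show "B0 \<in> conn A \<and> Min B0 = Min B0" using B0 by simp
next
  fix B assume B: "B \<in> conn A \<and> Min B = Min B0"
  obtain i j where ij: "B = {i..j}" "isint A i j" using B conn_char[OF fA] by blast
  obtain i' j' where ij': "B0 = {i'..j'}" "isint A i' j'" using B0 conn_char[OF fA] by blast
  have "Min B = i" "Min B0 = i'" using ij ij' by (simp_all add: isint_def)
  then have "i = i'" using B by simp
  then have "i \<in> {i..j}" "i \<in> {i'..j'}" using ij ij' by (auto simp: isint_def)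
  then have "i = i' \<and> j = j'" using isint_unique ij(2) ij'(2) by blast
  then show "B = B0" using ij ij' by simp
qed

lemma is_comp_conn_comp: "finite A \<Longrightarrow> is_comp (conn_comp A)"
proof -
  assume fA: "finite A"
  have "0 < card (THE B. B \<in> conn A \<and> Min B = m)" if mm: "m \<in> Min ` conn A" for m
  proof -
    obtain B0 where B0: "B0 \<in> conn A" "m = Min B0" using mm by blast
    have "B0 \<noteq> {}" "B0 \<subseteq> A" using B0 by (auto simp: conn_def)
    then have "0 < card B0" using fA by (meson card_gt_0_iff finite_subset)
    then show ?thesis using conn_the[OF fA B0(1)] B0(2) by simp
  qed
  moreover have "finite (Min ` conn A)" using finite_conn[OF fA] by simp
  ultimately show ?thesis by (auto simp: conn_comp_def is_comp_def)
qed

lemma sorted_list_snoc: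
  assumes "finite S" "\<forall>y\<in>S. y < x"
  shows "sorted_list_of_set (insert x S) = sorted_list_of_set S @ [x]"
proof -
  have "sorted_wrt (<) (sorted_list_of_set S @ [x])"
    using assms by (simp add: sorted_wrt_append)
  moreover have "set (sorted_list_of_set S @ [x]) = insert x S" using assms by auto
  moreover have "length (sorted_list_of_set S @ [x]) = card (insert x S)" using assms by auto
  moreover have fi: "finite (insert x S)" using assms(1) by simp
  ultimately show ?thesis using sorted_list_of_set_unique[OF fi, of "sorted_list_of_set S @ [x]"] by blast
qed

lemma conn_Nil: "conn {} = {}" by (auto simp: conn_def)
lemma conn_comp_empty: "conn_comp {} = []" by (simp add: conn_comp_def conn_Nil)



lemma isint_U1:
  assumes le: "\<forall>x\<in>A. x \<le> k" and k: "k \<notin> A"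
  shows "isint (insert (Suc k) A) i j \<longleftrightarrow> (i = Suc k \<and> j = Suc k) \<or> isint A i j"
proof
  assume h: "isint (insert (Suc k) A) i j"
  then have a: "i \<le> j" "{i..j} \<subseteq> insert (Suc k) A" "i = 0 \<or> i - 1 \<notin> insert (Suc k) A" "Suc j \<notin> insert (Suc k) A"
    unfolding isint_def by blast+
  show "(i = Suc k \<and> j = Suc k) \<or> isint A i j"
  proof (cases "Suc k \<in> {i..j}")
    case True
    have "j \<le> Suc k"
    proof (rule ccontr)
      assume "\<not> j \<le> Suc k"
      then have "Suc (Suc k) \<in> {i..j}" using True by auto
      then have "Suc (Suc k) \<in> A" using a(2) by auto
      then show False using le by auto
    qed
    moreover have "Suc k \<le> i"
    proof (rule ccontr)
      assume "\<not> Suc k \<le> i"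
      then have "k \<in> {i..j}" using True by auto
      then have "k \<in> A" using a(2) by auto
      then show False using k by simp
    qed
    ultimately show ?thesis using True by auto
  next
    case False
    then have "{i..j} \<subseteq> A" using a(2) by auto
    then show ?thesis using a unfolding isint_def by auto
  qed
next
  assume "(i = Suc k \<and> j = Suc k) \<or> isint A i j"
  then show "isint (insert (Suc k) A) i j"
  proof
    assume "i = Suc k \<and> j = Suc k"
    then show ?thesis using le k unfolding isint_def by auto
  next
    assume h: "isint A i j"
    then have a: "i \<le> j" "{i..j} \<subseteq> A" "i = 0 \<or> i - 1 \<notin> A" "Suc j \<notin> A"
      unfolding isint_def by blast+
    have "j \<in> A" using a(1,2) by auto
    then have "j < k" using le k by (metis le_neq_implies_less)
    then show ?thesis using a unfolding isint_def by auto
  qed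
qed

lemma conn_U1:
  assumes fA: "finite A" and le: "\<forall>x\<in>A. x \<le> k" and k: "k \<notin> A"
  shows "conn (insert (Suc k) A) = insert {Suc k..Suc k} (conn A)"
proof -
  have "conn (insert (Suc k) A) = {{i..j} |i j. isint (insert (Suc k) A) i j}"
    using fA by (simp add: conn_eq)
  also have "\<dots> = insert {Suc k..Suc k} {{i..j} |i j. isint A i j}"
    unfolding isint_U1[OF le k] by blast
  also have "\<dots> = insert {Suc k..Suc k} (conn A)" using fA by (simp add: conn_eq)
  finally show ?thesis .
qed

lemma Min_conn_le:
  assumes fA: "finite A" and le: "\<forall>x\<in>A. x \<le> k" and m: "m \<in> Min ` conn A"
  shows "m \<le> k"
proof -
  obtain B where B: "B \<in> conn A" "m = Min B" using m by blast
  then have "B \<noteq> {}" "B \<subseteq> A" by (auto simp: conn_def)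
  then have "Min B \<in> A" using fA by (meson Min_in finite_subset subsetD)
  then show ?thesis using B le by auto
qed

lemma conn_comp_U1:
  assumes fA: "finite A" and le: "\<forall>x\<in>A. x \<le> k" and k: "k \<notin> A"
  shows "conn_comp (insert (Suc k) A) = conn_comp A @ [1]"
proof -
  let ?A' = "insert (Suc k) A"
  have fA': "finite ?A'" using fA by simp
  have c: "conn ?A' = insert {Suc k..Suc k} (conn A)" by (rule conn_U1[OF fA le k])
  have M: "Min ` conn ?A' = insert (Suc k) (Min ` conn A)" unfolding c by simp
  have lt: "\<forall>y\<in>Min ` conn A. y < Suc k" using Min_conn_le[OF fA le] by (simp add: less_Suc_eq_le)
  have fM: "finite (Min ` conn A)" using finite_conn[OF fA] by simp
  have L: "sorted_list_of_set (Min ` conn ?A') = sorted_list_of_set (Min ` conn A) @ [Suc k]"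
    unfolding M by (rule sorted_list_snoc[OF fM lt])
  have f1: "card (THE B. B \<in> conn ?A' \<and> Min B = m) = card (THE B. B \<in> conn A \<and> Min B = m)"
    if m: "m \<in> set (sorted_list_of_set (Min ` conn A))" for m
  proof -
    obtain B0 where B0: "B0 \<in> conn A" "m = Min B0" using m fM by auto
    have "B0 \<in> conn ?A'" using B0 c by simp
    then show ?thesis using conn_the[OF fA' \<open>B0 \<in> conn ?A'\<close>] conn_the[OF fA B0(1)] B0(2) by simp
  qed
  have f2: "card (THE B. B \<in> conn ?A' \<and> Min B = Suc k) = 1"
  proof -
    have "{Suc k..Suc k} \<in> conn ?A'" using c by simp
    from conn_the[OF fA' this] show ?thesis by simp
  qed
  show ?thesis unfolding conn_comp_def L using f1 f2 by simp
qed

lemma isint_U2: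
  assumes le: "\<forall>x\<in>A. x \<le> k" and i0: "isint A i0 k"
  shows "isint (insert (Suc k) A) i j \<longleftrightarrow> (i = i0 \<and> j = Suc k) \<or> (isint A i j \<and> \<not> (i = i0 \<and> j = k))"
proof -
  have b: "i0 \<le> k" "{i0..k} \<subseteq> A" "i0 = 0 \<or> i0 - 1 \<notin> A" "Suc k \<notin> A"
    using i0 unfolding isint_def by blast+
  show ?thesis
  proof
    assume h: "isint (insert (Suc k) A) i j"
    then have a: "i \<le> j" "{i..j} \<subseteq> insert (Suc k) A" "i = 0 \<or> i - 1 \<notin> insert (Suc k) A" "Suc j \<notin> insert (Suc k) A"
      unfolding isint_def by blast+
    show "(i = i0 \<and> j = Suc k) \<or> (isint A i j \<and> \<not> (i = i0 \<and> j = k))"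
    proof (cases "Suc k \<in> {i..j}")
      case True
      have "j \<le> Suc k"
      proof (rule ccontr)
        assume "\<not> j \<le> Suc k"
        then have "Suc (Suc k) \<in> {i..j}" using True by auto
        then have "Suc (Suc k) \<in> A" using a(2) by auto
        then show False using le by auto
      qed
      then have j: "j = Suc k" using True by auto
      have ik: "i \<le> k"
      proof (rule ccontr)
        assume "\<not> i \<le> k"
        then have "i = Suc k" using True by auto
        moreover have "k \<in> A" using b(1,2) by auto
        ultimately show False using a(3) by auto
      qed
      have "isint A i k" unfolding isint_def
      proof (intro conjI)
        show "i \<le> k" by (rule ik)
        show "{i..k} \<subseteq> A"
        proof
          fix x assume "x \<in> {i..k}"
          then have "x \<in> {i..j}" "x \<noteq> Suc k" using j by auto
          then show "x \<in> A" using a(2) by auto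
        qed
        show "i = 0 \<or> i - 1 \<notin> A" using a(3) by auto
        show "Suc k \<notin> A" by (rule b(4))
      qed
      then have "i = i0" using isint_unique[OF _ i0, of i k k] ik b(1) by auto
      then show ?thesis using j by simp
    next
      case False
      then have sub: "{i..j} \<subseteq> A" using a(2) by auto
      then have "j \<in> A" using a(1) by auto
      then have "j \<le> k" using le by auto
      moreover have "j \<noteq> k" using a(4) by auto
      ultimately show ?thesis using a sub unfolding isint_def by auto
    qed
  next
    assume "(i = i0 \<and> j = Suc k) \<or> (isint A i j \<and> \<not> (i = i0 \<and> j = k))"
    then show "isint (insert (Suc k) A) i j"
    proof
      assume h: "i = i0 \<and> j = Suc k"
      have "{i0..Suc k} \<subseteq> insert (Suc k) A" using b(2) by (auto simp: le_Suc_eq)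
      moreover have "i0 = 0 \<or> i0 - 1 \<notin> insert (Suc k) A" using b(1,3) by auto
      moreover have "Suc (Suc k) \<notin> insert (Suc k) A" using le by auto
      ultimately show ?thesis using h b(1) unfolding isint_def by auto
    next
      assume h: "isint A i j \<and> \<not> (i = i0 \<and> j = k)"
      then have a: "i \<le> j" "{i..j} \<subseteq> A" "i = 0 \<or> i - 1 \<notin> A" "Suc j \<notin> A"
        unfolding isint_def by blast+
      have "j \<in> A" using a(1,2) by auto
      then have "j \<le> k" using le by auto
      have "k \<notin> {i..j}"
      proof
        assume "k \<in> {i..j}"
        then have "i = i0 \<and> j = k" using isint_unique[OF _ i0, of i j k] h b(1) by auto
        then show False using h by simp
      qed
      then have "j < k" using \<open>j \<le> k\<close> a(1) by auto
      then show ?thesis using a unfolding isint_def by auto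
    qed
  qed
qed


lemma conn_U2:
  assumes fA: "finite A" and le: "\<forall>x\<in>A. x \<le> k" and i0: "isint A i0 k"
  shows "conn (insert (Suc k) A) = insert {i0..Suc k} (conn A - {{i0..k}})"
proof -
  have i0k: "i0 \<le> k" using i0 by (simp add: isint_def)
  have "conn (insert (Suc k) A) = {{i..j} |i j. isint (insert (Suc k) A) i j}"
    using fA by (simp add: conn_eq)
  also have "\<dots> = insert {i0..Suc k} ({{i..j} |i j. isint A i j} - {{i0..k}})"
  proof (intro set_eqI iffI)
    fix B assume "B \<in> {{i..j} |i j. isint (insert (Suc k) A) i j}"
    then obtain i j where B: "B = {i..j}" "(i = i0 \<and> j = Suc k) \<or> (isint A i j \<and> \<not> (i = i0 \<and> j = k))"
      unfolding isint_U2[OF le i0] by blast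
    then show "B \<in> insert {i0..Suc k} ({{i..j} |i j. isint A i j} - {{i0..k}})"
    proof (cases "i = i0 \<and> j = Suc k")
      case False
      then have h: "isint A i j" "\<not> (i = i0 \<and> j = k)" using B by auto
      then have "{i..j} \<noteq> {i0..k}" using interval_eq[of i j i0 k] i0k by (auto simp: isint_def)
      then show ?thesis using B h by blast
    qed simp
  next
    fix B assume "B \<in> insert {i0..Suc k} ({{i..j} |i j. isint A i j} - {{i0..k}})"
    then consider "B = {i0..Suc k}" | i j where "B = {i..j}" "isint A i j" "{i..j} \<noteq> {i0..k}" by blast
    then show "B \<in> {{i..j} |i j. isint (insert (Suc k) A) i j}"
    proof cases
      case 1 then show ?thesis unfolding isint_U2[OF le i0] by blast
    next
      case (2 i j)
      then have "\<not> (i = i0 \<and> j = k)" by auto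
      then show ?thesis using 2 unfolding isint_U2[OF le i0] by blast
    qed
  qed
  also have "\<dots> = insert {i0..Suc k} (conn A - {{i0..k}})" using fA by (simp add: conn_eq)
  finally show ?thesis .
qed

lemma incr_snoc: "incr (xs @ [y]) = xs @ [Suc y]"
  by (simp add: incr_def)

lemma conn_comp_U2:
  assumes fA: "finite A" and le: "\<forall>x\<in>A. x \<le> k" and k: "k \<in> A"
  shows "conn_comp A \<noteq> [] \<and> conn_comp (insert (Suc k) A) = incr (conn_comp A)"
proof -
  let ?A' = "insert (Suc k) A"
  have fA': "finite ?A'" using fA by simp
  have "Suc k \<notin> A" using le by auto
  then have "k \<in> Max ` conn A" using ends_conn[OF fA] k by simp
  then obtain B0 where B0: "B0 \<in> conn A" "Max B0 = k" by auto
  then obtain i0 j0 where ij0: "B0 = {i0..j0}" "isint A i0 j0" using conn_char[OF fA] by blast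
  then have "j0 = k" using B0(2) by (simp add: isint_def)
  then have i0: "isint A i0 k" and C0: "{i0..k} \<in> conn A" using ij0 B0(1) by auto
  have i0k: "i0 \<le> k" using i0 by (simp add: isint_def)
  have c: "conn ?A' = insert {i0..Suc k} (conn A - {{i0..k}})" by (rule conn_U2[OF fA le i0])
  have C1: "{i0..Suc k} \<in> conn ?A'" using c by simp
  have M: "Min ` conn ?A' = Min ` conn A"
  proof -
    have a: "Min ` conn ?A' = insert i0 (Min ` (conn A - {{i0..k}}))" unfolding c using i0k by simp
    have b: "conn A = insert {i0..k} (conn A - {{i0..k}})" using C0 by blast
    have "Min ` conn A = Min ` insert {i0..k} (conn A - {{i0..k}})" using b by (rule arg_cong)
    also have "\<dots> = insert (Min {i0..k}) (Min ` (conn A - {{i0..k}}))" by (rule image_insert)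
    also have "\<dots> = insert i0 (Min ` (conn A - {{i0..k}}))" using i0k by simp
    finally show ?thesis using a by simp
  qed
  have mx: "m \<le> i0" if m: "m \<in> Min ` conn A" for m
  proof -
    obtain B where B: "B \<in> conn A" "m = Min B" using m by blast
    then obtain i j where ij: "B = {i..j}" "isint A i j" using conn_char[OF fA] by blast
    then have mi: "m = i" using B(2) by (simp add: isint_def)
    show ?thesis
    proof (rule ccontr)
      assume "\<not> m \<le> i0"
      then have "i0 < i" using mi by simp
      moreover have "i \<le> k" using ij le by (auto simp: isint_def)
      ultimately have "i - 1 \<in> {i0..k}" by auto
      then have "i - 1 \<in> A" using i0 by (auto simp: isint_def)
      then show False using ij(2) \<open>i0 < i\<close> by (auto simp: isint_def)
    qed
  qed
  have fM: "finite (Min ` conn A)" using finite_conn[OF fA] by simp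
  have i0M: "i0 \<in> Min ` conn A" using C0 i0k by (metis Min_Icc imageI)
  define M' where "M' = Min ` conn A - {i0}"
  have MM: "Min ` conn A = insert i0 M'" using i0M by (auto simp: M'_def)
  have lt: "\<forall>y\<in>M'. y < i0" using mx by (auto simp: M'_def le_neq_implies_less)
  have fM': "finite M'" using fM by (simp add: M'_def)
  have L: "sorted_list_of_set (Min ` conn A) = sorted_list_of_set M' @ [i0]"
    unfolding MM by (rule sorted_list_snoc[OF fM' lt])
  have f1: "card (THE B. B \<in> conn ?A' \<and> Min B = m) = card (THE B. B \<in> conn A \<and> Min B = m)"
    if m: "m \<in> set (sorted_list_of_set M')" for m
  proof -
    have mM: "m \<in> M'" using m fM' by simp
    then obtain B where B: "B \<in> conn A" "m = Min B" by (auto simp: M'_def)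
    have "B \<noteq> {i0..k}" using B(2) mM i0k by (auto simp: M'_def)
    then have "B \<in> conn ?A'" using B(1) c by simp
    then show ?thesis using conn_the[OF fA' \<open>B \<in> conn ?A'\<close>] conn_the[OF fA B(1)] B(2) by simp
  qed
  have f2: "card (THE B. B \<in> conn ?A' \<and> Min B = i0) = Suc (card (THE B. B \<in> conn A \<and> Min B = i0))"
  proof -
    have "card (THE B. B \<in> conn ?A' \<and> Min B = i0) = card {i0..Suc k}"
      using conn_the[OF fA' C1] i0k by simp
    moreover have "card (THE B. B \<in> conn A \<and> Min B = i0) = card {i0..k}"
      using conn_the[OF fA C0] i0k by simp
    ultimately show ?thesis using i0k by simp
  qed
  have e1: "conn_comp A = map (\<lambda>m. card (THE B. B \<in> conn A \<and> Min B = m)) (sorted_list_of_set M') @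
      [card (THE B. B \<in> conn A \<and> Min B = i0)]"
    unfolding conn_comp_def L by simp
  have e2: "conn_comp ?A' = map (\<lambda>m. card (THE B. B \<in> conn A \<and> Min B = m)) (sorted_list_of_set M') @
      [Suc (card (THE B. B \<in> conn A \<and> Min B = i0))]"
    unfolding conn_comp_def M L using f1 f2 by simp
  show ?thesis using e1 e2 by (simp add: incr_snoc)
qed



definition ends :: "nat set \<Rightarrow> nat set" where "ends A = {j \<in> A. Suc j \<notin> A}"

lemma c1_eq: "finite A \<Longrightarrow> c1 k A = ends A - {k}"
  by (simp add: c1_def ends_conn ends_def)

lemma c2_eq: "c2 k A = ends ({1..k} - A) - {k}"
  by (simp add: c2_def ends_conn ends_def)

lemma finite_ends: "finite A \<Longrightarrow> finite (ends A)"
  by (simp add: ends_def)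

definition W :: "'a::comm_ring_1 \<Rightarrow> 'a \<Rightarrow> nat \<Rightarrow> nat set \<Rightarrow> 'a" where
  "W q t k A = (q + t) ^ card (c2 k A) * t ^ card (c1 k A)"

lemma W1:
  assumes A: "A \<subseteq> {1..k}" and k: "k \<in> A"
  shows "W q t (Suc k) (insert (Suc k) A) = W q t k A"
proof -
  have fA: "finite A" using A finite_subset by blast
  have "c1 (Suc k) (insert (Suc k) A) = c1 k A"
    unfolding c1_eq[OF fA] c1_eq[OF finite_insert[THEN iffD2, OF fA]] using fA A k by (auto simp: ends_def)
  moreover have "{1..Suc k} - insert (Suc k) A = {1..k} - A" by auto
  then have "c2 (Suc k) (insert (Suc k) A) = c2 k A"
    unfolding c2_eq using k by (auto simp: ends_def)
  ultimately show ?thesis by (simp add: W_def)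
qed

lemma W2:
  assumes A: "A \<subseteq> {1..k}" and k: "k \<notin> A" "1 \<le> k"
  shows "W q t (Suc k) (insert (Suc k) A) = (q + t) * W q t k A"
proof -
  have fA: "finite A" using A finite_subset by blast
  have "c1 (Suc k) (insert (Suc k) A) = c1 k A"
    unfolding c1_eq[OF fA] c1_eq[OF finite_insert[THEN iffD2, OF fA]] using fA A k by (auto simp: ends_def)
  moreover
  have e: "{1..Suc k} - insert (Suc k) A = {1..k} - A" by auto
  have "c2 (Suc k) (insert (Suc k) A) = insert k (c2 k A)" "k \<notin> c2 k A"
    unfolding c2_eq e using k by (auto simp: ends_def)
  moreover have "finite (c2 k A)" unfolding c2_eq by (simp add: finite_ends)
  ultimately show ?thesis by (simp add: W_def)
qed

lemma W3:
  assumes A: "A \<subseteq> {1..k}" and k: "k \<notin> A" "1 \<le> k"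
  shows "W q t (Suc k) A = W q t k A"
proof -
  have fA: "finite A" using A finite_subset by blast
  have "c1 (Suc k) A = c1 k A"
    unfolding c1_eq[OF fA] using A k by (auto simp: ends_def)
  moreover
  have e: "{1..Suc k} - A = insert (Suc k) ({1..k} - A)" using A by auto
  have "c2 (Suc k) A = c2 k A"
    unfolding c2_eq e using k by (auto simp: ends_def)
  ultimately show ?thesis by (simp add: W_def)
qed

lemma W4:
  assumes A: "A \<subseteq> {1..k}" and k: "k \<in> A"
  shows "W q t (Suc k) A = t * W q t k A"
proof -
  have fA: "finite A" using A finite_subset by blast
  have "c1 (Suc k) A = insert k (c1 k A)" "k \<notin> c1 k A"
    unfolding c1_eq[OF fA] using A k by (auto simp: ends_def)
  moreover have "finite (c1 k A)" unfolding c1_eq[OF fA] by (simp add: finite_ends fA)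
  moreover
  have e: "{1..Suc k} - A = insert (Suc k) ({1..k} - A)" using A by auto
  have "c2 (Suc k) A = c2 k A"
    unfolding c2_eq e using k by (auto simp: ends_def)
  ultimately show ?thesis by (simp add: W_def)
qed


lemma AL1:
  assumes A: "A \<subseteq> {1..k}" and k: "k \<in> A"
  shows "alphaA A \<noteq> [] \<and> alphaA (insert (Suc k) A) = incr (alphaA A)"
proof -
  have fA: "finite A" using A finite_subset by blast
  have le: "\<forall>x\<in>A. x \<le> k" using A by auto
  show ?thesis unfolding alphaA_def using conn_comp_U2[OF fA le k] by blast
qed

lemma AL2:
  assumes A: "A \<subseteq> {1..k}" and k: "k \<notin> A"
  shows "alphaA (insert (Suc k) A) = alphaA A @ [1]"
proof -
  have fA: "finite A" using A finite_subset by blast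
  have le: "\<forall>x\<in>A. x \<le> k" using A by auto
  show ?thesis unfolding alphaA_def using conn_comp_U1[OF fA le k] by blast
qed

lemma BE1: "betaA (Suc k) (insert (Suc k) A) = betaA k A"
proof -
  have "{1..Suc k} - insert (Suc k) A = {1..k} - A" by auto
  then show ?thesis by (simp add: betaA_def)
qed

lemma BE2:
  assumes A: "A \<subseteq> {1..k}" and k: "k \<notin> A" "1 \<le> k"
  shows "betaA k A \<noteq> [] \<and> betaA (Suc k) A = incr (betaA k A)"
proof -
  have e: "{1..Suc k} - A = insert (Suc k) ({1..k} - A)" using A by auto
  have le: "\<forall>x\<in>{1..k} - A. x \<le> k" and kk: "k \<in> {1..k} - A" using k by auto
  show ?thesis unfolding betaA_def e using conn_comp_U2[OF _ le kk] by blast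
qed

lemma BE3:
  assumes A: "A \<subseteq> {1..k}" and k: "k \<in> A"
  shows "betaA (Suc k) A = betaA k A @ [1]"
proof -
  have e: "{1..Suc k} - A = insert (Suc k) ({1..k} - A)" using A by auto
  have le: "\<forall>x\<in>{1..k} - A. x \<le> k" and kk: "k \<notin> {1..k} - A" using k by auto
  show ?thesis unfolding betaA_def e using conn_comp_U1[OF _ le kk] by blast
qed

lemma comp_alpha: "A \<subseteq> {1..k} \<Longrightarrow> is_comp (alphaA A)"
  unfolding alphaA_def by (rule is_comp_conn_comp) (meson finite_atLeastAtMost finite_subset)
lemma comp_beta: "is_comp (betaA k A)"
  unfolding betaA_def by (rule is_comp_conn_comp) simp

definition TT :: "'a::comm_ring_1 \<Rightarrow> 'a \<Rightarrow> nat \<Rightarrow> nat set \<Rightarrow> nat list \<Rightarrow> nat list \<Rightarrow> 'a" where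
  "TT q t k A g d = W q t k A * Bhat q t (alphaA A) g * Bhat q t (betaA k A) d"

lemma TL1:
  fixes q t :: "'a::comm_ring_1"
  assumes A: "A \<subseteq> {1..k}" and k: "k \<in> A"
  shows "TT q t (Suc k) (insert (Suc k) A) g d =
    (if g \<noteq> [] \<and> 2 \<le> last g then q * TT q t k A (dec g) d else 0) +
    (if g \<noteq> [] \<and> last g = 1 then t * TT q t k A (butlast g) d else 0)"
proof -
  have a: "alphaA A \<noteq> []" "alphaA (insert (Suc k) A) = incr (alphaA A)" using AL1[OF A k] by auto
  show ?thesis
    unfolding TT_def W1[OF A k] BE1 a(2) Bhat_incr'[OF comp_alpha[OF A] a(1)]
    by (simp add: algebra_simps)
qed

lemma TL2:
  fixes q t :: "'a::comm_ring_1"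
  assumes A: "A \<subseteq> {1..k}" and k: "k \<notin> A" "1 \<le> k"
  shows "TT q t (Suc k) (insert (Suc k) A) g d =
    (if g \<noteq> [] \<and> last g = 1 then (q + t) * TT q t k A (butlast g) d else 0)"
  unfolding TT_def W2[OF A k] BE1 AL2[OF A k(1)] Bhat_snoc1[OF comp_alpha[OF A]]
  by (simp add: algebra_simps)

lemma TR1:
  fixes q t :: "'a::comm_ring_1"
  assumes A: "A \<subseteq> {1..k}" and k: "k \<notin> A" "1 \<le> k"
  shows "TT q t (Suc k) A g d =
    (if d \<noteq> [] \<and> 2 \<le> last d then q * TT q t k A g (dec d) else 0) +
    (if d \<noteq> [] \<and> last d = 1 then t * TT q t k A g (butlast d) else 0)"
proof -
  have b: "betaA k A \<noteq> []" "betaA (Suc k) A = incr (betaA k A)" using BE2[OF A k] by auto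
  show ?thesis
    unfolding TT_def W3[OF A k] b(2) Bhat_incr'[OF comp_beta b(1)]
    by (simp add: algebra_simps)
qed

lemma TR2:
  fixes q t :: "'a::comm_ring_1"
  assumes A: "A \<subseteq> {1..k}" and k: "k \<in> A"
  shows "TT q t (Suc k) A g d =
    (if d \<noteq> [] \<and> last d = 1 then t * TT q t k A g (butlast d) else 0)"
  unfolding TT_def W4[OF A k] BE3[OF A k] Bhat_snoc1[OF comp_beta]
  by (simp add: algebra_simps)



definition RL :: "'a::comm_ring_1 \<Rightarrow> 'a \<Rightarrow> nat \<Rightarrow> nat list \<Rightarrow> nat list \<Rightarrow> 'a" where
  "RL q t n g d = (\<Sum>A\<in>Pow {1..n}. TT q t (Suc n) (insert (Suc n) A) g d)"
definition RR :: "'a::comm_ring_1 \<Rightarrow> 'a \<Rightarrow> nat \<Rightarrow> nat list \<Rightarrow> nat list \<Rightarrow> 'a" where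
  "RR q t n g d = (\<Sum>A\<in>Pow {1..n}. TT q t (Suc n) A g d)"

lemma sum_Pow_Suc:
  "(\<Sum>A\<in>Pow {1..Suc n}. F A) = (\<Sum>A\<in>Pow {1..n}. F (insert (Suc n) A)) + (\<Sum>A\<in>Pow {1..n}. F A)"
proof -
  have e: "{1..Suc n} = insert (Suc n) {1..n}" by auto
  have d: "insert (Suc n) ` Pow {1..n} \<inter> Pow {1..n} = {}" by auto
  have i: "inj_on (insert (Suc n)) (Pow {1..n})"
    by (rule inj_onI) (metis PowD atLeastAtMost_iff insert_ident n_not_Suc_n subsetD Suc_n_not_le_n)
  have "(\<Sum>A\<in>Pow {1..Suc n}. F A) = (\<Sum>A\<in>insert (Suc n) ` Pow {1..n} \<union> Pow {1..n}. F A)"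
    unfolding e Pow_insert by (simp add: Un_commute)
  also have "\<dots> = (\<Sum>A\<in>insert (Suc n) ` Pow {1..n}. F A) + (\<Sum>A\<in>Pow {1..n}. F A)"
    by (rule sum.union_disjoint[OF _ _ d]) simp_all
  also have "(\<Sum>A\<in>insert (Suc n) ` Pow {1..n}. F A) = (\<Sum>A\<in>Pow {1..n}. F (insert (Suc n) A))"
    by (subst sum.reindex[OF i]) simp
  finally show ?thesis .
qed

lemma RL_Suc:
  fixes q t :: "'a::comm_ring_1"
  shows "RL q t (Suc n) g d =
    (if g \<noteq> [] \<and> 2 \<le> last g then q * RL q t n (dec g) d else 0) +
    (if g \<noteq> [] \<and> last g = 1 then t * RL q t n (butlast g) d + (q + t) * RR q t n (butlast g) d else 0)"
proof -
  let ?c1 = "g \<noteq> [] \<and> last g = 1" and ?c2 = "g \<noteq> [] \<and> 2 \<le> last g"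
  have "RL q t (Suc n) g d = (\<Sum>A\<in>Pow {1..n}. TT q t (Suc (Suc n)) (insert (Suc (Suc n)) (insert (Suc n) A)) g d)
     + (\<Sum>A\<in>Pow {1..n}. TT q t (Suc (Suc n)) (insert (Suc (Suc n)) A) g d)"
    unfolding RL_def by (rule sum_Pow_Suc)
  also have "(\<Sum>A\<in>Pow {1..n}. TT q t (Suc (Suc n)) (insert (Suc (Suc n)) (insert (Suc n) A)) g d) =
     (\<Sum>A\<in>Pow {1..n}. (if ?c2 then q * TT q t (Suc n) (insert (Suc n) A) (dec g) d else 0) +
                     (if ?c1 then t * TT q t (Suc n) (insert (Suc n) A) (butlast g) d else 0))"
  proof (rule sum.cong[OF refl])
    fix A assume "A \<in> Pow {1..n}"
    then have "insert (Suc n) A \<subseteq> {1..Suc n}" by auto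
    then show "TT q t (Suc (Suc n)) (insert (Suc (Suc n)) (insert (Suc n) A)) g d =
      (if ?c2 then q * TT q t (Suc n) (insert (Suc n) A) (dec g) d else 0) +
      (if ?c1 then t * TT q t (Suc n) (insert (Suc n) A) (butlast g) d else 0)"
      by (rule TL1) simp
  qed
  also have "(\<Sum>A\<in>Pow {1..n}. TT q t (Suc (Suc n)) (insert (Suc (Suc n)) A) g d) =
     (\<Sum>A\<in>Pow {1..n}. (if ?c1 then (q + t) * TT q t (Suc n) A (butlast g) d else 0))"
  proof (rule sum.cong[OF refl])
    fix A assume "A \<in> Pow {1..n}"
    then have A: "A \<subseteq> {1..Suc n}" "Suc n \<notin> A" by auto
    show "TT q t (Suc (Suc n)) (insert (Suc (Suc n)) A) g d =
      (if ?c1 then (q + t) * TT q t (Suc n) A (butlast g) d else 0)"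
      by (rule TL2[OF A]) simp
  qed
  finally have e: "RL q t (Suc n) g d = (\<Sum>A\<in>Pow {1..n}. (if ?c2 then q * TT q t (Suc n) (insert (Suc n) A) (dec g) d else 0) +
                     (if ?c1 then t * TT q t (Suc n) (insert (Suc n) A) (butlast g) d else 0)) +
      (\<Sum>A\<in>Pow {1..n}. (if ?c1 then (q + t) * TT q t (Suc n) A (butlast g) d else 0))" .
  consider (A) "?c1" "\<not> ?c2" | (B) "\<not> ?c1" "?c2" | (C) "\<not> ?c1" "\<not> ?c2" by linarith
  then show ?thesis
  proof cases
    case A
    show ?thesis using A by (subst e) (simp add: RL_def RR_def sum_distrib_left sum.distrib)
  next
    case B
    show ?thesis using B by (subst e) (simp add: RL_def RR_def sum_distrib_left sum.distrib)
  next
    case C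
    show ?thesis by (subst e, simp only: if_not_P[OF C(1)] if_not_P[OF C(2)]) simp
  qed
qed

lemma RR_Suc:
  fixes q t :: "'a::comm_ring_1"
  shows "RR q t (Suc n) g d =
    (if d \<noteq> [] \<and> 2 \<le> last d then q * RR q t n g (dec d) else 0) +
    (if d \<noteq> [] \<and> last d = 1 then t * RR q t n g (butlast d) + t * RL q t n g (butlast d) else 0)"
proof -
  let ?c1 = "d \<noteq> [] \<and> last d = 1" and ?c2 = "d \<noteq> [] \<and> 2 \<le> last d"
  have "RR q t (Suc n) g d = (\<Sum>A\<in>Pow {1..n}. TT q t (Suc (Suc n)) (insert (Suc n) A) g d)
     + (\<Sum>A\<in>Pow {1..n}. TT q t (Suc (Suc n)) A g d)"
    unfolding RR_def by (rule sum_Pow_Suc)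
  also have "(\<Sum>A\<in>Pow {1..n}. TT q t (Suc (Suc n)) (insert (Suc n) A) g d) =
     (\<Sum>A\<in>Pow {1..n}. (if ?c1 then t * TT q t (Suc n) (insert (Suc n) A) g (butlast d) else 0))"
  proof (rule sum.cong[OF refl])
    fix A assume "A \<in> Pow {1..n}"
    then have "insert (Suc n) A \<subseteq> {1..Suc n}" by auto
    then show "TT q t (Suc (Suc n)) (insert (Suc n) A) g d =
      (if ?c1 then t * TT q t (Suc n) (insert (Suc n) A) g (butlast d) else 0)"
      by (rule TR2) simp
  qed
  also have "(\<Sum>A\<in>Pow {1..n}. TT q t (Suc (Suc n)) A g d) =
     (\<Sum>A\<in>Pow {1..n}. (if ?c2 then q * TT q t (Suc n) A g (dec d) else 0) +
        (if ?c1 then t * TT q t (Suc n) A g (butlast d) else 0))"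
  proof (rule sum.cong[OF refl])
    fix A assume "A \<in> Pow {1..n}"
    then have A: "A \<subseteq> {1..Suc n}" "Suc n \<notin> A" by auto
    show "TT q t (Suc (Suc n)) A g d =
      (if ?c2 then q * TT q t (Suc n) A g (dec d) else 0) +
        (if ?c1 then t * TT q t (Suc n) A g (butlast d) else 0)"
      by (rule TR1[OF A]) simp
  qed
  finally have e: "RR q t (Suc n) g d = (\<Sum>A\<in>Pow {1..n}. (if ?c1 then t * TT q t (Suc n) (insert (Suc n) A) g (butlast d) else 0)) +
     (\<Sum>A\<in>Pow {1..n}. (if ?c2 then q * TT q t (Suc n) A g (dec d) else 0) +
        (if ?c1 then t * TT q t (Suc n) A g (butlast d) else 0))" .
  consider (A) "?c1" "\<not> ?c2" | (B) "\<not> ?c1" "?c2" | (C) "\<not> ?c1" "\<not> ?c2" by linarith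
  then show ?thesis
  proof cases
    case A
    show ?thesis using A by (subst e) (simp add: RL_def RR_def sum_distrib_left sum.distrib)
  next
    case B
    show ?thesis using B by (subst e) (simp add: RL_def RR_def sum_distrib_left sum.distrib)
  next
    case C
    show ?thesis by (subst e, simp only: if_not_P[OF C(1)] if_not_P[OF C(2)]) simp
  qed
qed

lemma conn_comp_1: "conn_comp {1} = [1]"
  using conn_comp_U1[of "{}" 0] by (simp add: conn_comp_empty)

lemma ends_1: "ends {1} = {1}" by (auto simp: ends_def)
lemma ends_1': "ends {Suc 0} = {Suc 0}" by (auto simp: ends_def)
lemma ends_0: "ends {} = {}" by (auto simp: ends_def)

lemma conn_comp_1': "conn_comp {Suc 0} = [Suc 0]"
  using conn_comp_1 by simp

lemma RL_0: "RL q t 0 g d = (if g = [1] \<and> d = [] then 1 else 0)"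
proof -
  have "RL q t 0 g d = TT q t 1 {1} g d" by (simp add: RL_def)
  moreover have "W q t 1 {1} = 1" by (simp add: W_def c1_eq c2_eq ends_1 ends_1' ends_0)
  moreover have "alphaA {1} = [1]" "betaA 1 {1} = []" by (simp_all add: alphaA_def betaA_def conn_comp_1 conn_comp_1' conn_comp_empty)
  moreover have "Bhat q t [1] g = (if g = [1] then 1 else 0)"
    using comp_sum1[of g] by (auto simp: Bhat_single)
  ultimately show ?thesis by (simp add: TT_def Bhat_Nil nsym_one_def HH_def)
qed

lemma RR_0: "RR q t 0 g d = (if g = [] \<and> d = [1] then 1 else 0)"
proof -
  have "RR q t 0 g d = TT q t 1 {} g d" by (simp add: RR_def)
  moreover have "{1..1} - {} = {1::nat}" by simp
  then have "W q t 1 {} = 1" by (simp add: W_def c1_eq c2_eq ends_1 ends_1' ends_0)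
  moreover have "alphaA {} = []" "betaA 1 {} = [1]" by (simp_all add: alphaA_def betaA_def conn_comp_1 conn_comp_1' conn_comp_empty)
  moreover have "Bhat q t [1] d = (if d = [1] then 1 else 0)"
    using comp_sum1[of d] by (auto simp: Bhat_single)
  ultimately show ?thesis by (simp add: TT_def Bhat_Nil nsym_one_def HH_def)
qed

lemma LR_eq: "LL q t n = RL q t n \<and> LR q t n = RR q t n"
proof (induction n)
  case 0
  show ?case by (intro conjI ext) (simp_all add: LL_0 LR_0 RL_0 RR_0)
next
  case (Suc n)
  show ?case by (intro conjI ext) (simp_all add: LL_Suc LR_Suc RL_Suc RR_Suc Suc.IH)
qed



theorem coprod_Bhatk:
  fixes q t :: "'a::comm_ring_1"
  shows "coprod (Bhatk q t k) =
            (\<lambda>(\<beta>, \<gamma>). \<Sum>A\<in>Pow {1..k}.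
               (q + t) ^ card (c2 k A) * t ^ card (c1 k A) *
               tensor (Bhat q t (alphaA A)) (Bhat q t (betaA k A)) (\<beta>, \<gamma>))"
proof (intro ext, clarify)
  fix g d
  have tm: "(q + t) ^ card (c2 k A) * t ^ card (c1 k A) * tensor (Bhat q t (alphaA A)) (Bhat q t (betaA k A)) (g, d)
      = TT q t k A g d" for A
    by (simp add: TT_def W_def tensor_def mult.assoc)
  show "coprod (Bhatk q t k) (g, d) = (\<Sum>A\<in>Pow {1..k}.
               (q + t) ^ card (c2 k A) * t ^ card (c1 k A) *
               tensor (Bhat q t (alphaA A)) (Bhat q t (betaA k A)) (g, d))"
  proof (cases k)
    case 0
    have sub: "{a. Bhatk q t 0 a \<noteq> 0} \<subseteq> {[]}"
      by (auto simp: Bhatk_def Bhat_Nil nsym_one_def HH_def split: if_splits)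
    have "coprod (Bhatk q t 0) (g, d) = (\<Sum>a\<in>{[]}. Bhatk q t 0 a * of_nat (cop_coeff a g d))"
      unfolding coprod_def by (simp only: prod.case) (rule sum.mono_neutral_left[OF _ sub]; auto)
    also have "\<dots> = (if g = [] \<and> d = [] then 1 else 0)"
      by (simp add: Bhatk_def Bhat_Nil nsym_one_def HH_def cop_Nil)
    finally have l: "coprod (Bhatk q t 0) (g, d) = (if g = [] \<and> d = [] then 1 else 0)" .
    have "c2 0 {} = {}" "c1 0 {} = {}" by (simp_all add: c1_eq c2_eq ends_0)
    moreover have "alphaA {} = []" "betaA 0 {} = []" by (simp_all add: alphaA_def betaA_def conn_comp_empty)
    ultimately show ?thesis using l 0 by (simp add: tensor_def Bhat_Nil nsym_one_def HH_def)
  next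
    case (Suc n)
    have "coprod (Bhatk q t k) (g, d) = LL q t n g d + LR q t n g d" unfolding Suc by (rule coprod_LL)
    also have "\<dots> = RL q t n g d + RR q t n g d" using LR_eq[of q t n] by simp
    also have "\<dots> = (\<Sum>A\<in>Pow {1..Suc n}. TT q t (Suc n) A g d)"
      unfolding RL_def RR_def by (rule sum_Pow_Suc[symmetric])
    finally have "coprod (Bhatk q t (Suc n)) (g, d) = (\<Sum>A\<in>Pow {1..Suc n}. TT q t (Suc n) A g d)"
      using Suc by simp
    then show ?thesis unfolding Suc by (simp add: TT_def W_def tensor_def mult.assoc)
  qed
qed

lemma rm_Nil_iff: "rm x b = Some [] \<longleftrightarrow> b = (if x = 0 then [] else [x])"
  by (cases b rule: rev_cases) (auto simp: rm_def)

lemma copo_Nil: "copo [] og od = (if og = Some [] \<and> od = Some [] then 1 else 0)"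
  by (cases og; cases od) (auto simp: copo_def cop_Nil)

theorem coprod_Hk: "coprod (Hk k :: nat list \<Rightarrow> complex) =
            (\<lambda>(\<beta>, \<gamma>). \<Sum>i\<le>k. tensor (Hk i) (Hk (k - i)) (\<beta>, \<gamma>))"
proof (intro ext, clarify)
  fix g d
  define f where "f x = (if x = 0 then [] else [x :: nat])" for x
  have Hk: "Hk x = HH (f x)" for x by (simp add: Hk_def f_def)
  have supp: "{a. (Hk k :: nat list \<Rightarrow> complex) a \<noteq> 0} = {f k}" by (auto simp: Hk HH_def)
  have "cop_coeff (f k) g d = (\<Sum>x\<le>k. copo [] (rm x g) (rm (k - x) d))"
  proof (cases "k = 0")
    case True then show ?thesis by (simp add: f_def copo_def rm_def)
  next
    case False
    then have "f k = [] @ [k]" by (simp add: f_def)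
    then show ?thesis using cop_snoc by metis
  qed
  also have "\<dots> = (\<Sum>x\<le>k. if g = f x \<and> d = f (k - x) then 1 else 0)"
    by (rule sum.cong) (simp_all add: copo_Nil rm_Nil_iff f_def)
  finally have c: "cop_coeff (f k) g d = (\<Sum>x\<le>k. if g = f x \<and> d = f (k - x) then 1 else 0)" .
  have "coprod (Hk k :: nat list \<Rightarrow> complex) (g, d) = of_nat (cop_coeff (f k) g d)"
    by (simp add: coprod_def supp Hk HH_def)
  also have "\<dots> = (\<Sum>x\<le>k. tensor (Hk x) (Hk (k - x)) (g, d) :: complex)"
    unfolding c by (simp add: of_nat_sum tensor_def Hk HH_def if_distrib cong: if_cong) (rule sum.cong; auto)
  finally show "coprod (Hk k :: nat list \<Rightarrow> complex) (g, d) = (\<Sum>i\<le>k. tensor (Hk i) (Hk (k - i)) (g, d))" .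
qed



lemma Lam_Bhat: "Lam a = Bhat (-1) 1 a"
  by (simp add: Lam_def Bhat_def fun_eq_iff)

lemma conn_Icc:
  assumes ab: "a \<le> b"
  shows "conn {a..b} = {{a..b}}"
proof -
  have "isint {a..b} i j \<longleftrightarrow> i = a \<and> j = b" for i j
  proof
    assume h: "isint {a..b} i j"
    then have h1: "i \<le> j" "{i..j} \<subseteq> {a..b}" "i = 0 \<or> i - 1 \<notin> {a..b}" "Suc j \<notin> {a..b}"
      unfolding isint_def by blast+
    then have "a \<le> i" "j \<le> b" by auto
    then show "i = a \<and> j = b" using h1 by auto
  next
    assume "i = a \<and> j = b"
    then show "isint {a..b} i j" using ab unfolding isint_def by auto
  qed
  then show ?thesis using conn_eq[of "{a..b}"] by auto
qed

lemma conn_comp_Icc: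
  assumes ab: "a \<le> b"
  shows "conn_comp {a..b} = [Suc b - a]"
proof -
  have c: "conn {a..b} = {{a..b}}" by (rule conn_Icc[OF ab])
  have "(THE B. B \<in> conn {a..b} \<and> Min B = a) = {a..b}"
    using conn_the[of "{a..b}" "{a..b}"] c ab by simp
  then show ?thesis using c ab by (simp add: conn_comp_def)
qed

lemma c2_empty_iff:
  assumes A: "A \<subseteq> {1..k}"
  shows "c2 k A = {} \<longleftrightarrow> (\<exists>i\<le>k. A = {1..i})"
proof
  assume h: "c2 k A = {}"
  define C where "C = {1..k} - A"
  have cl: "\<And>j. j \<in> C \<Longrightarrow> j \<noteq> k \<Longrightarrow> Suc j \<in> C"
    using h unfolding c2_eq C_def[symmetric] ends_def by blast
  show "\<exists>i\<le>k. A = {1..i}"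
  proof (cases "C = {}")
    case True
    then have "A = {1..k}" using A by (auto simp: C_def)
    then show ?thesis by blast
  next
    case False
    have fC: "finite C" by (simp add: C_def)
    define m where "m = Min C"
    have mC: "m \<in> C" using Min_in[OF fC False] by (simp add: m_def)
    have mle: "\<And>x. x \<in> C \<Longrightarrow> m \<le> x" using Min_le[OF fC] by (simp add: m_def)
    have m1: "1 \<le> m" "m \<le> k" using mC by (auto simp: C_def)
    have up: "m + d \<le> k \<longrightarrow> m + d \<in> C" for d
    proof (induction d)
      case 0 then show ?case using mC by simp
    next
      case (Suc d)
      show ?case
      proof
        assume "m + Suc d \<le> k"
        then have "m + d \<in> C" "m + d \<noteq> k" using Suc by auto
        then show "m + Suc d \<in> C" using cl by simp
      qed
    qed
    have "C = {m..k}"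
    proof
      show "C \<subseteq> {m..k}" using mle by (auto simp: C_def)
      show "{m..k} \<subseteq> C"
      proof
        fix x assume "x \<in> {m..k}"
        then have "m + (x - m) \<le> k" "m + (x - m) = x" by auto
        then show "x \<in> C" using up[of "x - m"] by simp
      qed
    qed
    then have Ceq: "{1..k} - A = {m..k}" by (simp add: C_def)
    have "A = {1..m - 1}"
    proof
      show "A \<subseteq> {1..m - 1}"
      proof
        fix x assume x: "x \<in> A"
        then have "x \<in> {1..k}" using A by auto
        moreover have "x \<notin> {m..k}" using x Ceq by blast
        ultimately show "x \<in> {1..m - 1}" by auto
      qed
      show "{1..m - 1} \<subseteq> A"
      proof
        fix x assume x: "x \<in> {1..m - 1}"
        then have "x \<in> {1..k}" "x \<notin> {m..k}" using m1 by auto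
        then show "x \<in> A" using Ceq by blast
      qed
    qed
    then show ?thesis using m1 by (intro exI[of _ "m - 1"]) auto
  qed
next
  assume "\<exists>i\<le>k. A = {1..i}"
  then obtain i where i: "i \<le> k" "A = {1..i}" by blast
  then have "{1..k} - A = {Suc i..k}" by auto
  then show "c2 k A = {}" unfolding c2_eq by (auto simp: ends_def)
qed

theorem coprod_Lamk: "coprod (Lamk k :: nat list \<Rightarrow> complex) =
            (\<lambda>(\<beta>, \<gamma>). \<Sum>i\<le>k. tensor (Lamk i) (Lamk (k - i)) (\<beta>, \<gamma>))"
proof (intro ext, clarify)
  fix g d
  define f where "f x = (if x = 0 then [] else [x :: nat])" for x
  define T where "T A = (tensor (Bhat (-1) 1 (alphaA A)) (Bhat (-1) 1 (betaA k A)) (g, d) :: complex)" for A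
  have Lk: "Lamk x = Bhat (-1) 1 (f x)" for x by (simp add: Lamk_def Lam_Bhat f_def)
  have BL: "Bhatk (-1 :: complex) 1 k = Lamk k" by (simp add: Bhatk_def Lamk_def Lam_Bhat)
  have fc2: "finite (c2 k A)" for A unfolding c2_eq by (simp add: finite_ends)
  have "coprod (Lamk k :: nat list \<Rightarrow> complex) (g, d) =
      (\<Sum>A\<in>Pow {1..k}. ((-1) + 1) ^ card (c2 k A) * 1 ^ card (c1 k A) * T A)"
    using coprod_Bhatk[of "-1 :: complex" 1 k] unfolding BL T_def by simp
  also have "\<dots> = (\<Sum>A\<in>Pow {1..k}. if c2 k A = {} then T A else 0)"
    by (rule sum.cong[OF refl]) (simp add: fc2 card_eq_0_iff card_gt_0_iff)
  also have "\<dots> = (\<Sum>A\<in>{A \<in> Pow {1..k}. c2 k A = {}}. T A)"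
    by (rule sum.inter_filter[symmetric]) simp
  also have "{A \<in> Pow {1..k}. c2 k A = {}} = (\<lambda>i. {1..i}) ` {..k}"
  proof (intro set_eqI iffI)
    fix A assume "A \<in> {A \<in> Pow {1..k}. c2 k A = {}}"
    then have "A \<subseteq> {1..k}" "c2 k A = {}" by auto
    then obtain i where "i \<le> k" "A = {1..i}" using c2_empty_iff by blast
    then show "A \<in> (\<lambda>i. {1..i}) ` {..k}" by blast
  next
    fix A assume "A \<in> (\<lambda>i. {1..i}) ` {..k}"
    then obtain i where i: "i \<le> k" "A = {1..i}" by blast
    then have A: "A \<subseteq> {1..k}" by auto
    then have "c2 k A = {}" using c2_empty_iff[OF A] i by blast
    then show "A \<in> {A \<in> Pow {1..k}. c2 k A = {}}" using A by simp
  qed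
  also have "(\<Sum>A\<in>(\<lambda>i. {1..i}) ` {..k}. T A) = (\<Sum>i\<le>k. T {1..i})"
  proof (rule sum.reindex[unfolded comp_def])
    show "inj_on (\<lambda>i. {1..i::nat}) {..k}"
      by (rule inj_onI) (metis card_atLeastAtMost diff_Suc_1)
  qed
  also have "\<dots> = (\<Sum>i\<le>k. tensor (Lamk i) (Lamk (k - i)) (g, d))"
  proof (rule sum.cong[OF refl])
    fix i assume i: "i \<in> {..k}"
    have "alphaA {1..i} = f i"
      by (cases "i = 0") (simp_all add: alphaA_def f_def conn_comp_empty conn_comp_Icc)
    moreover have "{1..k} - {1..i} = {Suc i..k}" by auto
    then have "betaA k {1..i} = f (k - i)"
      using i by (cases "i = k") (simp_all add: betaA_def f_def conn_comp_empty conn_comp_Icc)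
    ultimately show "T {1..i} = tensor (Lamk i) (Lamk (k - i)) (g, d)"
      by (simp add: T_def Lk)
  qed
  finally show "coprod (Lamk k :: nat list \<Rightarrow> complex) (g, d) = (\<Sum>i\<le>k. tensor (Lamk i) (Lamk (k - i)) (g, d))" .
qed

theorem theorem4p9:
  shows "(\<forall>\<alpha> \<beta>. is_comp \<alpha> \<longrightarrow> is_comp \<beta> \<longrightarrow>
            nsym_mult (Bhat qq tt \<alpha>) (Bhat qq tt \<beta>) = Bhat qq tt (\<alpha> @ \<beta>))
    \<and> (nsym :: (nat list \<Rightarrow> Cqt) set) \<subseteq> gen_alg (range (Bhatk qq tt))
    \<and> (\<forall>k. coprod (Bhatk qq tt k) =
            (\<lambda>(\<beta>, \<gamma>). \<Sum>A\<in>Pow {1..k}.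
               (qq + tt) ^ card (c2 k A) * tt ^ card (c1 k A) *
               tensor (Bhat qq tt (alphaA A)) (Bhat qq tt (betaA k A)) (\<beta>, \<gamma>)))
    \<and> (\<forall>k. coprod (Hk k :: nat list \<Rightarrow> complex) =
            (\<lambda>(\<beta>, \<gamma>). \<Sum>i\<le>k. tensor (Hk i) (Hk (k - i)) (\<beta>, \<gamma>)))
    \<and> (\<forall>k. coprod (Lamk k :: nat list \<Rightarrow> complex) =
            (\<lambda>(\<beta>, \<gamma>). \<Sum>i\<le>k. tensor (Lamk i) (Lamk (k - i)) (\<beta>, \<gamma>)))"
proof (intro conjI)
  show "\<forall>\<alpha> \<beta>. is_comp \<alpha> \<longrightarrow> is_comp \<beta> \<longrightarrow>
            nsym_mult (Bhat qq tt \<alpha>) (Bhat qq tt \<beta>) = Bhat qq tt (\<alpha> @ \<beta>)"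
    using Bhat_mult by blast
  show "(nsym :: (nat list \<Rightarrow> Cqt) set) \<subseteq> gen_alg (range (Bhatk qq tt))"
    by (rule nsym_gen[OF qq_nz])
  show "\<forall>k. coprod (Bhatk qq tt k) =
            (\<lambda>(\<beta>, \<gamma>). \<Sum>A\<in>Pow {1..k}.
               (qq + tt) ^ card (c2 k A) * tt ^ card (c1 k A) *
               tensor (Bhat qq tt (alphaA A)) (Bhat qq tt (betaA k A)) (\<beta>, \<gamma>))"
    by (intro allI) (rule coprod_Bhatk)
  show "\<forall>k. coprod (Hk k :: nat list \<Rightarrow> complex) =
            (\<lambda>(\<beta>, \<gamma>). \<Sum>i\<le>k. tensor (Hk i) (Hk (k - i)) (\<beta>, \<gamma>))"
    by (intro allI) (rule coprod_Hk)
  show "\<forall>k. coprod (Lamk k :: nat list \<Rightarrow> complex) =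
            (\<lambda>(\<beta>, \<gamma>). \<Sum>i\<le>k. tensor (Lamk i) (Lamk (k - i)) (\<beta>, \<gamma>))"
    by (intro allI) (rule coprod_Lamk)
qed

end
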